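(* Let $\mathcal M=(S,A,P,R)$ be an MDP with rewards, $\mathrm{Bad}\subset S$ a set of sink states, $s_0\in S$ with $\mathrm{Val}(s_0)>0$, and $\mathcal M'$ the pruned MDP. Let $\sigma^*$ be a strategy of $\mathcal M'$ maximizing $\mathbb E'_{\sigma,s_0}(\mathsf{MP})$ over all strategies $\sigma$ of $\mathcal M'$. Then (1) $\Pr_{\sigma^*,s_0}(\Box\neg\mathrm{Bad})=\mathrm{Val}(s_0)$, and (2) $\mathbb E_{\sigma^*,s_0}(\mathsf{MP}\mid\Box\neg\mathrm{Bad})=\max_{\sigma\in\Sigma_{\mathcal M,s_0}(\Box\neg\mathrm{Bad})}\mathbb E_{\sigma,s_0}(\mathsf{MP}\mid\Box\neg\mathrm{Bad})$.
   Context: An MDP with rewards is $\mathcal M=(S,A,P,R)$ with $S,A$ finite, $P$ a partial map $S\times A\to\mathrm{Dist}(S)$ and $R:S\times A\to\mathbb R$; $a$ is legal at $s$ if $P(s,a)$ is defined; $P(s,a,s')=P(s,a)(s')$. A strategy maps finite paths to distributions over legal actions at the last state (history-dependent, randomized); $\Pr_{\sigma,s}$, $\mathbb E_{\sigma,s}$ are the induced probability measure and expectation on infinite paths from $s$. States in $\mathrm{Bad}$ are sinks (single legal action, self-loop with probability 1); $\Box\neg\mathrm{Bad}$ is the event of never visiting $\mathrm{Bad}$; $\mathrm{Val}(s)=\max_\sigma\Pr_{\sigma,s}(\Box\neg\mathrm{Bad})$; $\Sigma_{\mathcal M,s}(\Box\neg\mathrm{Bad})$ is the set of strategies attaining $\mathrm{Val}(s)$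 from $s$. For a path $s_0a_0s_1a_1\dots$, $\mathrm{Reward}_n=\sum_{i=0}^{n-1}R(s_i,a_i)$. $\mathbb E_{\sigma,s}(\mathsf{MP}\mid\Box\neg\mathrm{Bad})=\liminf_{n\to\infty}\frac1n\mathbb E_{\sigma,s}(\mathrm{Reward}_n\cdot\mathbf 1_{\Box\neg\mathrm{Bad}})/\Pr_{\sigma,s}(\Box\neg\mathrm{Bad})$, and in any MDP $\mathbb E_{\sigma,s}(\mathsf{MP})=\liminf_{n\to\infty}\frac1n\mathbb E_{\sigma,s}(\mathrm{Reward}_n)$. $\mathrm{Opt}_{\mathcal M}=\{(s,a): a\text{ legal at }s,\ \mathrm{Val}(s)=\sum_{s'}P(s,a,s')\mathrm{Val}(s')\}$. The pruned MDP $\mathcal M'=(S',A,P',R')$ has $S'=\{s:\mathrm{Val}(s)>0\}$, $R'=R$ restricted to $S'$, and $P'(s,a,s')=P(s,a,s')\mathrm{Val}(s')/\mathrm{Val}(s)$ if $s\in S'$ and $(s,a)\in\mathrm{Opt}_{\mathcal M}$ (undefined otherwise). Strategies of $\mathcal M'$ are identified with strategies of $\mathcal M$ that after every finite path $\rho$ only play actions $a$ with $(\mathrm{last}(\rho),a)\in\mathrm{Opt}_{\mathcal M}$; $\mathbb E'_{\sigma,s}$ is the expectation in $\mathcal M'$ (with rewards $R'$). *)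

theory Defs
  imports "HOL-Probability.Probability"
begin

text \<open>
  The transition function is a partial map  P :: 's => 'a => 's pmf option
  (action a is legal at s iff P s a is defined).
  A (history-dependent, randomized) strategy receives the finite path
  s_0 a_0 ... s_(n-1) a_(n-1) s_n, given as the list of pairs (s_i,a_i), i<n,
  together with the last state s_n, and returns a distribution over actions.
\<close>

type_synonym ('s, 'a) strategy = "('s \<times> 'a) list \<Rightarrow> 's \<Rightarrow> 'a pmf"

definition legal :: "('s \<Rightarrow> 'a \<Rightarrow> 's pmf option) \<Rightarrow> 's \<Rightarrow> 'a \<Rightarrow> bool" where
  "legal P s a \<longleftrightarrow> P s a \<noteq> None"

definition is_strategy :: "('s \<Rightarrow> 'a \<Rightarrow> 's pmf option) \<Rightarrow> ('s, 'a) strategy \<Rightarrow> bool" where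
  "is_strategy P \<sigma> \<longleftrightarrow> (\<forall>h s. set_pmf (\<sigma> h s) \<subseteq> {a. legal P s a})"

definition step_kernel ::
  "('s \<Rightarrow> 'a \<Rightarrow> 's pmf) \<Rightarrow> ('s, 'a) strategy \<Rightarrow> 's \<Rightarrow> nat \<Rightarrow> (nat \<Rightarrow> 's \<times> 'a) \<Rightarrow> ('s \<times> 'a) measure"
where
  "step_kernel T \<sigma> s0 i \<omega> =
     (if i = 0 then measure_pmf (map_pmf (\<lambda>a. (s0, a)) (\<sigma> [] s0))
      else measure_pmf
        (bind_pmf (T (fst (\<omega> (i - 1))) (snd (\<omega> (i - 1))))
          (\<lambda>t. map_pmf (\<lambda>b. (t, b)) (\<sigma> (map \<omega> [0..<i]) t))))"

definition path_measure ::
  "('s \<Rightarrow> 'a \<Rightarrow> 's pmf) \<Rightarrow> ('s, 'a) strategy \<Rightarrow> 's \<Rightarrow> (nat \<Rightarrow> 's \<times> 'a) measure"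
where
  "path_measure T \<sigma> s0 =
     projective_family.lim UNIV
       (Ionescu_Tulcea.CI (step_kernel T \<sigma> s0) (\<lambda>_. count_space UNIV))
       (\<lambda>_. count_space UNIV)"

text \<open>Total transition function of the original MDP (only used at legal actions).\<close>
definition trans :: "('s \<Rightarrow> 'a \<Rightarrow> 's pmf option) \<Rightarrow> 's \<Rightarrow> 'a \<Rightarrow> 's pmf" where
  "trans P s a = the (P s a)"

definition safe_paths :: "'s set \<Rightarrow> (nat \<Rightarrow> 's \<times> 'a) set" where
  "safe_paths Bad = {\<omega>. \<forall>i. fst (\<omega> i) \<notin> Bad}"

definition Pr_safe ::
  "('s \<Rightarrow> 'a \<Rightarrow> 's pmf option) \<Rightarrow> 's set \<Rightarrow> ('s, 'a) strategy \<Rightarrow> 's \<Rightarrow> real" where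
  "Pr_safe P Bad \<sigma> s = measure (path_measure (trans P) \<sigma> s) (safe_paths Bad)"

definition Val :: "('s \<Rightarrow> 'a \<Rightarrow> 's pmf option) \<Rightarrow> 's set \<Rightarrow> 's \<Rightarrow> real" where
  "Val P Bad s = (SUP \<sigma>\<in>{\<sigma>. is_strategy P \<sigma>}. Pr_safe P Bad \<sigma> s)"

definition opt_safe_strategies ::
  "('s \<Rightarrow> 'a \<Rightarrow> 's pmf option) \<Rightarrow> 's set \<Rightarrow> 's \<Rightarrow> ('s, 'a) strategy set" where
  "opt_safe_strategies P Bad s =
     {\<sigma>. is_strategy P \<sigma> \<and> Pr_safe P Bad \<sigma> s = Val P Bad s}"

definition reward_n :: "('s \<Rightarrow> 'a \<Rightarrow> real) \<Rightarrow> nat \<Rightarrow> (nat \<Rightarrow> 's \<times> 'a) \<Rightarrow> real" where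
  "reward_n R n \<omega> = (\<Sum>i<n. R (fst (\<omega> i)) (snd (\<omega> i)))"

definition cond_MP ::
  "('s \<Rightarrow> 'a \<Rightarrow> 's pmf option) \<Rightarrow> ('s \<Rightarrow> 'a \<Rightarrow> real) \<Rightarrow> 's set \<Rightarrow> ('s, 'a) strategy \<Rightarrow> 's \<Rightarrow> ereal"
where
  "cond_MP P R Bad \<sigma> s =
     liminf (\<lambda>n. ereal ((1 / real n) *
        (\<integral>\<omega>. reward_n R n \<omega> * indicator (safe_paths Bad) \<omega> \<partial>path_measure (trans P) \<sigma> s)
        / Pr_safe P Bad \<sigma> s))"

definition exp_MP ::
  "('s \<Rightarrow> 'a \<Rightarrow> 's pmf) \<Rightarrow> ('s \<Rightarrow> 'a \<Rightarrow> real) \<Rightarrow> ('s, 'a) strategy \<Rightarrow> 's \<Rightarrow> ereal" where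
  "exp_MP T R \<sigma> s =
     liminf (\<lambda>n. ereal ((1 / real n) * (\<integral>\<omega>. reward_n R n \<omega> \<partial>path_measure T \<sigma> s)))"

definition Opt :: "('s::finite \<Rightarrow> 'a \<Rightarrow> 's pmf option) \<Rightarrow> 's set \<Rightarrow> ('s \<times> 'a) set" where
  "Opt P Bad = {(s, a). legal P s a \<and>
      Val P Bad s = (\<Sum>t\<in>UNIV. pmf (the (P s a)) t * Val P Bad t)}"

text \<open>Elsewhere P' is undefined in the paper;
  we fill in an arbitrary value (Dirac at s), which is never used by strategies
  of M' on paths of M' (they only play Opt actions and stay in S').\<close>
definition pruned_states :: "('s::finite \<Rightarrow> 'a \<Rightarrow> 's pmf option) \<Rightarrow> 's set \<Rightarrow> 's set" where
  "pruned_states P Bad = {s. Val P Bad s > 0}"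

definition pruned_trans :: "('s::finite \<Rightarrow> 'a \<Rightarrow> 's pmf option) \<Rightarrow> 's set \<Rightarrow> 's \<Rightarrow> 'a \<Rightarrow> 's pmf" where
  "pruned_trans P Bad s a =
     (if s \<in> pruned_states P Bad \<and> (s, a) \<in> Opt P Bad
      then embed_pmf (\<lambda>t. pmf (the (P s a)) t * Val P Bad t / Val P Bad s)
      else return_pmf s)"

text \<open>Strategies of M', identified with strategies of M playing only Opt actions
  after every finite path.\<close>
definition is_pruned_strategy ::
  "('s::finite \<Rightarrow> 'a \<Rightarrow> 's pmf option) \<Rightarrow> 's set \<Rightarrow> ('s, 'a) strategy \<Rightarrow> bool" where
  "is_pruned_strategy P Bad \<sigma> \<longleftrightarrow> (\<forall>h s. set_pmf (\<sigma> h s) \<subseteq> {a. (s, a) \<in> Opt P Bad})"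

text \<open>Rewards R' = R restricted to S'; for the paths of M' (which stay in S') we use R.\<close>
definition pruned_exp_MP ::
  "('s::finite \<Rightarrow> 'a \<Rightarrow> 's pmf option) \<Rightarrow> ('s \<Rightarrow> 'a \<Rightarrow> real) \<Rightarrow> 's set \<Rightarrow> ('s, 'a) strategy \<Rightarrow> 's \<Rightarrow> ereal"
where
  "pruned_exp_MP P R Bad \<sigma> s = exp_MP (pruned_trans P Bad) R \<sigma> s"

end

theory Submission
  imports Defs
begin
definition nxt :: "('s \<Rightarrow> 'a \<Rightarrow> 's pmf) \<Rightarrow> ('s, 'a) strategy \<Rightarrow> 's \<Rightarrow> ('s \<times> 'a) list \<Rightarrow> ('s \<times> 'a) pmf" where
  "nxt T \<sigma> s h = (if h = [] then map_pmf (\<lambda>a. (s, a)) (\<sigma> [] s)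
     else bind_pmf (T (fst (last h)) (snd (last h))) (\<lambda>t. map_pmf (\<lambda>b. (t, b)) (\<sigma> h t)))"

primrec hist :: "('s \<Rightarrow> 'a \<Rightarrow> 's pmf) \<Rightarrow> ('s, 'a) strategy \<Rightarrow> 's \<Rightarrow> nat \<Rightarrow> ('s \<times> 'a) list pmf" where
  "hist T \<sigma> s 0 = return_pmf []"
| "hist T \<sigma> s (Suc n) = bind_pmf (hist T \<sigma> s n) (\<lambda>h. map_pmf (\<lambda>x. h @ [x]) (nxt T \<sigma> s h))"

definition tof :: "nat \<Rightarrow> 'x list \<Rightarrow> nat \<Rightarrow> 'x" where
  "tof n h = (\<lambda>i. if i < n then h ! i else undefined)"

lemma set_hist: "h \<in> set_pmf (hist T \<sigma> s n) \<Longrightarrow> length h = n"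
  by (induction n arbitrary: h) auto

abbreviation "CS \<equiv> (\<lambda>_::nat. count_space (UNIV :: ('s::countable \<times> 'a::countable) set))"

lemma PiM_CS: "PiM {0..<n} CS = count_space (PiE {0..<n} (\<lambda>_. UNIV :: ('s::countable \<times> 'a::countable) set))"
  using count_space_PiM_finite[of "{0..<n}" "\<lambda>_. UNIV :: ('s \<times> 'a) set"] by simp

lemma IT: "Ionescu_Tulcea (step_kernel T \<sigma> s) (CS :: nat \<Rightarrow> ('s::countable \<times> 'a::countable) measure)"
  apply (rule Ionescu_Tulcea.intro)
  subgoal for i
    unfolding PiM_CS measurable_count_space_eq1
    by (auto simp: step_kernel_def measure_pmf_in_subprob_space)
  subgoal for i x unfolding step_kernel_def if_distrib[of measure_pmf, symmetric]
    by (rule measure_pmf.prob_space_axioms)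
  done

lemma tof_space: "tof n h \<in> PiE {0..<n} (\<lambda>_. UNIV)"
  by (auto simp: tof_def PiE_def extensional_def)

lemma step_kernel_tof: "length h = n \<Longrightarrow> step_kernel T \<sigma> s n (tof n h) = measure_pmf (nxt T \<sigma> s h)"
proof -
  assume l: "length h = n"
  show ?thesis
  proof (cases "n = 0")
    case True then show ?thesis using l by (simp add: step_kernel_def nxt_def)
  next
    case False
    then have "h \<noteq> []" using l by auto
    moreover have "map (tof n h) [0..<n] = h"
      using l by (metis (no_types, lifting) atLeastLessThan_iff map_eq_conv map_nth set_upt tof_def)
    moreover have "tof n h (n - 1) = last h"
    proof -
      have lh: "last h = h ! (n - 1)" using last_conv_nth[OF \<open>h \<noteq> []\<close>] l by simp
      show ?thesis unfolding lh using False by (simp add: tof_def)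
    qed
    ultimately show ?thesis using False by (simp add: step_kernel_def nxt_def)
  qed
qed

lemma fun_upd_tof: "length h = n \<Longrightarrow> fun_upd (tof n h) n x = tof (Suc n) (h @ [x])"
  by (auto simp: tof_def fun_eq_iff nth_append)

lemma C_eq:
  fixes T :: "'s::countable \<Rightarrow> 'a::countable \<Rightarrow> 's pmf"
  shows "Ionescu_Tulcea.C (step_kernel T \<sigma> s) CS 0 n (\<lambda>_. undefined) =
    distr (measure_pmf (hist T \<sigma> s n)) (PiM {0..<n} CS) (tof n)"
proof (induction n)
  interpret IT: Ionescu_Tulcea "step_kernel T \<sigma> s" CS by (rule IT)
  case 0
  have t0: "tof 0 ([] :: ('s \<times> 'a) list) = (\<lambda>_. undefined)" by (simp add: tof_def)
  have m: "(tof 0 :: ('s \<times> 'a) list \<Rightarrow> _) \<in> count_space UNIV \<rightarrow>\<^sub>M PiM {0..<0} CS"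
    unfolding PiM_CS measurable_count_space_eq1 by (intro Pi_I) (simp only: space_count_space tof_space)
  have "distr (return (count_space UNIV) ([] :: ('s \<times> 'a) list)) (PiM {0..<0} CS) (tof 0) = return (PiM {0..<0} CS) (tof 0 [])"
    by (rule distr_return[OF m]) simp
  then show ?case using t0 by (simp only: IT.C.simps hist.simps return_pmf.rep_eq)
next
  interpret IT: Ionescu_Tulcea "step_kernel T \<sigma> s" CS by (rule IT)
  case (Suc n)
  have "IT.C 0 (Suc n) (\<lambda>_. undefined) = IT.C 0 n (\<lambda>_. undefined) \<bind> IT.eP n"
    by simp
  also have "\<dots> = measure_pmf (hist T \<sigma> s n) \<bind> (\<lambda>h. IT.eP n (tof n h))"
    unfolding Suc
    by (rule bind_distr[OF _ IT.measurable_eP]) (auto simp: PiM_CS tof_space)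
  also have "\<dots> = measure_pmf (hist T \<sigma> s n) \<bind>
      (\<lambda>h. distr (measure_pmf (map_pmf (\<lambda>x. h @ [x]) (nxt T \<sigma> s h))) (PiM {0..<Suc n} CS) (tof (Suc n)))"
  proof (rule bind_measure_pmf_cong)
    fix h
    show "IT.eP n (tof n h) \<in> space (subprob_algebra (PiM {0..<Suc n} CS))"
      using IT.measurable_eP[of n] by (rule measurable_space) (simp add: PiM_CS tof_space)
    show "distr (measure_pmf (map_pmf (\<lambda>x. h @ [x]) (nxt T \<sigma> s h))) (PiM {0..<Suc n} CS) (tof (Suc n))
        \<in> space (subprob_algebra (PiM {0..<Suc n} CS))"
      by (auto simp: space_subprob_algebra PiM_CS tof_space PiE_eq_empty_iff intro!: subprob_space.subprob_space_distr
           measure_pmf.subprob_space_axioms)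
    assume "h \<in> set_pmf (hist T \<sigma> s n)"
    then have l: "length h = n" by (rule set_hist)
    have fu: "fun_upd (tof n h) n = (\<lambda>x. tof (Suc n) (h @ [x]))"
      by (rule ext) (rule fun_upd_tof[OF l])
    show "IT.eP n (tof n h) = distr (measure_pmf (map_pmf (\<lambda>x. h @ [x]) (nxt T \<sigma> s h))) (PiM {0..<Suc n} CS) (tof (Suc n))"
      unfolding IT.eP_def step_kernel_tof[OF l] map_pmf_rep_eq
      by (subst distr_distr) (auto simp: PiM_CS tof_space comp_def fu)
  qed
  also have "\<dots> = distr (measure_pmf (hist T \<sigma> s n) \<bind> (\<lambda>h. measure_pmf (map_pmf (\<lambda>x. h @ [x]) (nxt T \<sigma> s h))))
       (PiM {0..<Suc n} CS) (tof (Suc n))"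
    by (rule distr_bind[symmetric, where K="count_space UNIV"])
       (auto simp: PiM_CS tof_space measure_pmf_in_subprob_space)
  also have "\<dots> = distr (measure_pmf (hist T \<sigma> s (Suc n))) (PiM {0..<Suc n} CS) (tof (Suc n))"
    by (simp add: measure_pmf_bind)
  finally show ?case .
qed

lemma space_PiM_CS: "space (PiM UNIV CS) = (UNIV :: (nat \<Rightarrow> 's::countable \<times> 'a::countable) set)"
  by (auto simp: space_PiM PiE_def extensional_def)

lemma pre_set: "{\<omega>. map \<omega> [0..<n] \<in> Y} =
   prod_emb UNIV (CS :: nat \<Rightarrow> ('s::countable \<times> 'a::countable) measure) {0..<n} {f \<in> PiE {0..<n} (\<lambda>_. UNIV). map f [0..<n] \<in> Y}"
proof -
  have *: "map (restrict x {0..<n}) [0..<n] = map x [0..<n]" for x :: "nat \<Rightarrow> 's \<times> 'a"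
    by (intro map_cong) auto
  show ?thesis by (auto simp: prod_emb_def PiE_def extensional_def *)
qed

lemma path_lim: "path_measure T \<sigma> s = projective_family.lim UNIV (Ionescu_Tulcea.CI (step_kernel T \<sigma> s) CS) CS"
  by (simp add: path_measure_def)

lemma sets_path: "sets (path_measure T \<sigma> (s :: 's::countable)) = sets (PiM UNIV (CS :: nat \<Rightarrow> ('s \<times> 'a::countable) measure))"
proof -
  interpret IT: Ionescu_Tulcea "step_kernel T \<sigma> s" CS by (rule IT)
  show ?thesis unfolding path_lim by (rule IT.PF.sets_lim)
qed

lemma space_path: "space (path_measure T \<sigma> (s :: 's::countable)) = (UNIV :: (nat \<Rightarrow> 's \<times> 'a::countable) set)"
  using sets_eq_imp_space_eq[OF sets_path] space_PiM_CS by metis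

lemma pre_in_sets: "{\<omega>. map \<omega> [0..<n] \<in> Y} \<in> sets (path_measure T \<sigma> (s :: 's::countable) :: (nat \<Rightarrow> 's \<times> 'a::countable) measure)"
  unfolding sets_path pre_set
  by (rule measurable_prod_emb) (auto simp: PiM_CS)

lemma emeasure_path:
  fixes T :: "'s::countable \<Rightarrow> 'a::countable \<Rightarrow> 's pmf"
  shows "emeasure (path_measure T \<sigma> s) {\<omega>. map \<omega> [0..<n] \<in> Y} = emeasure (measure_pmf (hist T \<sigma> s n)) Y"
proof -
  interpret IT: Ionescu_Tulcea "step_kernel T \<sigma> s" CS by (rule IT)
  define X where "X = {f \<in> PiE {0..<n} (\<lambda>_. UNIV :: ('s \<times> 'a) set). map f [0..<n] \<in> Y}"
  have X: "X \<in> sets (PiM {0..<n} CS)" by (auto simp: PiM_CS X_def)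
  have "emeasure (path_measure T \<sigma> s) {\<omega>. map \<omega> [0..<n] \<in> Y} = emeasure IT.PF.lim (IT.PF.emb UNIV {0..<n} X)"
    unfolding path_lim pre_set X_def ..
  also have "\<dots> = emeasure (IT.CI {0..<n}) X"
    by (rule IT.lim[OF _ X]) simp
  also have "\<dots> = emeasure (IT.C 0 n (\<lambda>_. undefined)) (IT.PF.emb {0..<n} {0..<n} X)"
    by (rule IT.emeasure_CI[OF _ X]) simp
  also have "IT.PF.emb {0..<n} {0..<n} X = X"
    by (rule prod_emb_id) (unfold X_def space_count_space, blast)
  also have "emeasure (IT.C 0 n (\<lambda>_. undefined)) X = emeasure (measure_pmf (hist T \<sigma> s n)) (tof n -` X)"
    unfolding C_eq
    by (subst emeasure_distr[OF _ X]) (auto simp: PiM_CS tof_space)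
  also have "\<dots> = emeasure (measure_pmf (hist T \<sigma> s n)) (tof n -` X \<inter> set_pmf (hist T \<sigma> s n))"
    by (rule emeasure_Int_set_pmf[symmetric])
  also have "tof n -` X \<inter> set_pmf (hist T \<sigma> s n) = Y \<inter> set_pmf (hist T \<sigma> s n)"
  proof -
    have "map (tof n h) [0..<n] = h" if "length h = n" for h :: "('s \<times> 'a) list"
      using that by (metis (no_types, lifting) atLeastLessThan_iff map_eq_conv map_nth set_upt tof_def)
    then show ?thesis using set_hist by (fastforce simp: X_def tof_space)
  qed
  also have "emeasure (measure_pmf (hist T \<sigma> s n)) \<dots> = emeasure (measure_pmf (hist T \<sigma> s n)) Y"
    by (rule emeasure_Int_set_pmf)
  finally show ?thesis .
qed

lemma prob_space_path: "prob_space (path_measure T \<sigma> (s :: 's::countable) :: (nat \<Rightarrow> 's \<times> 'a::countable) measure)"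
proof (rule prob_spaceI)
  have "space (path_measure T \<sigma> s) = {\<omega>. map \<omega> [0..<0] \<in> (UNIV :: ('s \<times> 'a) list set)}"
    by (simp add: space_path)
  then show "emeasure (path_measure T \<sigma> s) (space (path_measure T \<sigma> s)) = 1"
    by (simp only: emeasure_path) simp
qed

lemma measure_path:
  fixes T :: "'s::countable \<Rightarrow> 'a::countable \<Rightarrow> 's pmf"
  shows "measure (path_measure T \<sigma> s) {\<omega>. map \<omega> [0..<n] \<in> Y} = measure_pmf.prob (hist T \<sigma> s n) Y"
  by (simp add: measure_def emeasure_path)

definition shift :: "('s, 'a) strategy \<Rightarrow> 's \<times> 'a \<Rightarrow> ('s, 'a) strategy" where
  "shift \<sigma> p = (\<lambda>h x. \<sigma> (p # h) x)"

definition Hn :: "nat \<Rightarrow> 'x list set" where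
  "Hn n = {h. length h = n}"

lemma finite_Hn[simp]: "finite (Hn n :: ('x::finite) list set)"
  using finite_lists_length_eq[of "UNIV :: 'x set" n] by (simp add: Hn_def)

lemma set_hist_Hn: "set_pmf (hist T \<sigma> s n) \<subseteq> Hn n"
  using set_hist by (auto simp: Hn_def)

lemma pmf_hist_notHn: "length h \<noteq> n \<Longrightarrow> pmf (hist T \<sigma> s n) h = 0"
  using set_hist by (metis pmf_eq_0_set_pmf)

lemma pmf_hist_0: "pmf (hist T \<sigma> s 0) h = (if h = [] then 1 else 0)"
  by (simp add: pmf_return)

lemma pmf_map_snoc: "pmf (map_pmf (\<lambda>y. h @ [y]) M) (h @ [x]) = pmf M x"
  using pmf_map_inj'[of "\<lambda>y. h @ [y]" M x] by (simp add: inj_def)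

lemma pmf_hist_snoc: "pmf (hist T \<sigma> s (Suc n)) (h @ [x]) = pmf (hist T \<sigma> s n) h * pmf (nxt T \<sigma> s h) x"
proof -
  have "pmf (hist T \<sigma> s (Suc n)) (h @ [x]) =
      (\<integral>g. pmf (map_pmf (\<lambda>y. g @ [y]) (nxt T \<sigma> s g)) (h @ [x]) \<partial>measure_pmf (hist T \<sigma> s n))"
    by (simp add: pmf_bind)
  also have "\<dots> = (\<Sum>g\<in>{h}. pmf (map_pmf (\<lambda>y. g @ [y]) (nxt T \<sigma> s g)) (h @ [x]) * pmf (hist T \<sigma> s n) g)"
  proof (rule integral_measure_pmf_real)
    fix g assume "pmf (map_pmf (\<lambda>y. g @ [y]) (nxt T \<sigma> s g)) (h @ [x]) \<noteq> 0"
    then show "g \<in> {h}" by (auto simp: pmf_eq_0_set_pmf)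
  qed simp
  also have "\<dots> = pmf (hist T \<sigma> s n) h * pmf (nxt T \<sigma> s h) x"
    by (simp add: pmf_map_snoc)
  finally show ?thesis .
qed

lemma pmf_nxt: "pmf (nxt T \<sigma> s h) (t, b) = (if h = [] then (if t = s then pmf (\<sigma> [] s) b else 0)
   else pmf (T (fst (last h)) (snd (last h))) t * pmf (\<sigma> h t) b)"
proof (cases "h = []")
  case True
  then show ?thesis
    by (auto simp: nxt_def pmf_map_inj' inj_def pmf_eq_0_set_pmf)
next
  case False
  have "pmf (nxt T \<sigma> s h) (t, b) = (\<integral>t'. pmf (map_pmf (Pair t') (\<sigma> h t')) (t, b) \<partial>measure_pmf (T (fst (last h)) (snd (last h))))"
    using False by (simp add: nxt_def pmf_bind)
  also have "\<dots> = (\<Sum>t'\<in>{t}. pmf (map_pmf (Pair t') (\<sigma> h t')) (t, b) * pmf (T (fst (last h)) (snd (last h))) t')"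
  proof (rule integral_measure_pmf_real)
    fix g assume "pmf (map_pmf (Pair g) (\<sigma> h g)) (t, b) \<noteq> 0"
    then show "g \<in> {t}" by (auto simp: pmf_eq_0_set_pmf)
  qed simp
  also have "\<dots> = pmf (T (fst (last h)) (snd (last h))) t * pmf (\<sigma> h t) b"
    by (simp add: pmf_map_inj' inj_def)
  finally show ?thesis using False by simp
qed

lemma sum_Hn_Suc: "(\<Sum>g\<in>Hn (Suc n). f g) = (\<Sum>h\<in>Hn n. \<Sum>x\<in>UNIV. f (h @ [x :: 'x::finite]))"
proof -
  have "(Hn (Suc n) :: 'x list set) = (\<lambda>(h, x). h @ [x]) ` (Hn n \<times> UNIV)"
  proof (rule equalityI)
    show "(Hn (Suc n) :: 'x list set) \<subseteq> (\<lambda>(h, x). h @ [x]) ` (Hn n \<times> UNIV)"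
    proof (rule subsetI)
      fix g :: "'x list" assume "g \<in> Hn (Suc n)"
      then have "g \<noteq> []" "length (butlast g) = n" by (auto simp: Hn_def)
      then have "g = (\<lambda>(h, x). h @ [x]) (butlast g, last g)" "(butlast g, last g) \<in> Hn n \<times> UNIV"
        by (auto simp: Hn_def)
      then show "g \<in> (\<lambda>(h, x). h @ [x]) ` (Hn n \<times> UNIV)"
        by (rule image_eqI)
    qed
  qed (auto simp: Hn_def)
  moreover have "inj_on (\<lambda>(h, x). h @ [x :: 'x]) (Hn n \<times> UNIV)"
    by (auto simp: inj_on_def)
  ultimately have 1: "sum f (Hn (Suc n)) = sum (f \<circ> (\<lambda>(h, x). h @ [x])) (Hn n \<times> UNIV)"
    by (metis sum.reindex)
  show ?thesis unfolding 1 sum.cartesian_product by (intro sum.cong) auto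
qed


lemma sum_Hn_Suc_front: "(\<Sum>g\<in>Hn (Suc n). f g) = (\<Sum>x\<in>UNIV. \<Sum>h\<in>Hn n. f (x # (h :: 'x::finite list)))"
proof -
  have "(Hn (Suc n) :: 'x list set) = (\<lambda>(x, h). x # h) ` (UNIV \<times> Hn n)"
  proof (rule equalityI)
    show "(Hn (Suc n) :: 'x list set) \<subseteq> (\<lambda>(x, h). x # h) ` (UNIV \<times> Hn n)"
    proof (rule subsetI)
      fix g :: "'x list" assume "g \<in> Hn (Suc n)"
      then have "g \<noteq> []" "length (tl g) = n" by (auto simp: Hn_def)
      then have "g = (\<lambda>(x, h). x # h) (hd g, tl g)" "(hd g, tl g) \<in> UNIV \<times> Hn n"
        by (auto simp: Hn_def)
      then show "g \<in> (\<lambda>(x, h). x # h) ` (UNIV \<times> Hn n)"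
        by (rule image_eqI)
    qed
  qed (auto simp: Hn_def)
  moreover have "inj_on (\<lambda>(x, h). x # (h :: 'x list)) (UNIV \<times> Hn n)"
    by (auto simp: inj_on_def)
  ultimately have 1: "sum f (Hn (Suc n)) = sum (f \<circ> (\<lambda>(x, h). x # h)) (UNIV \<times> Hn n)"
    by (metis sum.reindex)
  show ?thesis unfolding 1 sum.cartesian_product by (intro sum.cong) auto
qed

lemma prob_hist_sum:
  fixes T :: "'s::finite \<Rightarrow> 'a::finite \<Rightarrow> 's pmf"
  shows "measure_pmf.prob (hist T \<sigma> s n) Y = (\<Sum>h\<in>Hn n. if h \<in> Y then pmf (hist T \<sigma> s n) h else 0)"
proof -
  have "measure_pmf.prob (hist T \<sigma> s n) Y = measure_pmf.prob (hist T \<sigma> s n) (Y \<inter> Hn n)"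
  proof -
    have "Y \<inter> Hn n \<inter> set_pmf (hist T \<sigma> s n) = Y \<inter> set_pmf (hist T \<sigma> s n)"
      using set_hist_Hn[of T \<sigma> s n] by blast
    then show ?thesis by (metis measure_Int_set_pmf)
  qed
  also have "\<dots> = (\<Sum>h\<in>Y \<inter> Hn n. pmf (hist T \<sigma> s n) h)"
    by (rule measure_measure_pmf_finite) simp
  also have "\<dots> = (\<Sum>h\<in>Hn n. if h \<in> Y then pmf (hist T \<sigma> s n) h else 0)"
    by (simp add: sum.If_cases Int_commute)
  finally show ?thesis .
qed

lemma sum_hist_1:
  fixes T :: "'s::finite \<Rightarrow> 'a::finite \<Rightarrow> 's pmf"
  shows "(\<Sum>h\<in>Hn n. pmf (hist T \<sigma> s n) h) = 1"
  by (rule sum_pmf_eq_1) (auto simp: set_hist_Hn)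

lemma expectation_hist:
  fixes T :: "'s::finite \<Rightarrow> 'a::finite \<Rightarrow> 's pmf"
  shows "measure_pmf.expectation (hist T \<sigma> s n) f = (\<Sum>h\<in>Hn n. f h * pmf (hist T \<sigma> s n) h)"
  by (rule integral_measure_pmf_real) (simp, auto dest: set_hist simp: Hn_def)

declare hist.simps[simp del]

lemma hist_front:
  fixes T :: "'s::finite \<Rightarrow> 'a::finite \<Rightarrow> 's pmf"
  shows "pmf (hist T \<sigma> s (Suc n)) ((s', a) # g) = (if s' = s then pmf (\<sigma> [] s) a *
      (\<Sum>t\<in>UNIV. pmf (T s a) t * pmf (hist T (shift \<sigma> (s, a)) t n) g) else 0)"
proof (induction n arbitrary: g)
  case 0
  show ?case
  proof (cases "g = []")
    case True
    have "(\<Sum>t\<in>UNIV. pmf (T s a) t) = 1" by (rule sum_pmf_eq_1) auto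
    then show ?thesis using True pmf_hist_snoc[of T \<sigma> s 0 "[]" "(s', a)"]
      by (simp add: pmf_hist_0 pmf_nxt)
  next
    case False
    then show ?thesis by (simp add: pmf_hist_0 pmf_hist_notHn del: hist.simps)
  qed
next
  case (Suc n)
  show ?case
  proof (cases "g = []")
    case True
    then show ?thesis by (simp add: pmf_hist_notHn)
  next
    case False
    then obtain g' x where g: "g = g' @ [x]" by (metis append_butlast_last_id)
    obtain t0 b where x: "x = (t0, b)" by fastforce
    have "pmf (hist T \<sigma> s (Suc (Suc n))) ((s', a) # g) =
        pmf (hist T \<sigma> s (Suc n)) ((s', a) # g') * pmf (nxt T \<sigma> s ((s', a) # g')) x"
      using pmf_hist_snoc[of T \<sigma> s "Suc n" "(s', a) # g'" x] g by simp
    also have "\<dots> = (if s' = s then pmf (\<sigma> [] s) a *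
      (\<Sum>t\<in>UNIV. pmf (T s a) t * pmf (hist T (shift \<sigma> (s, a)) t n) g') else 0) * pmf (nxt T \<sigma> s ((s', a) # g')) x"
      by (simp add: Suc.IH)
    also have "\<dots> = (if s' = s then pmf (\<sigma> [] s) a *
      (\<Sum>t\<in>UNIV. pmf (T s a) t * pmf (hist T (shift \<sigma> (s, a)) t (Suc n)) g) else 0)"
    proof (cases "s' = s")
      case False then show ?thesis by simp
    next
      case True
      show ?thesis
      proof (cases "g' = []")
        case False
        have "pmf (hist T (shift \<sigma> (s, a)) t (Suc n)) g =
            pmf (hist T (shift \<sigma> (s, a)) t n) g' * pmf (nxt T \<sigma> s ((s', a) # g')) x" for t
          using False True by (simp add: g pmf_hist_snoc x pmf_nxt shift_def)
        then show ?thesis using True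
          by (simp add: sum_distrib_left mult_ac)
      next
        case gnil: True
        show ?thesis
        proof (cases "n = 0")
          case False
          then show ?thesis using gnil True by (simp add: g pmf_hist_notHn)
        next
          case n0: True
          have h1: "pmf (hist T (shift \<sigma> (s, a)) t (Suc 0)) g =
            (if t = t0 then pmf (\<sigma> [(s, a)] t0) b else 0)" for t
            using gnil pmf_hist_snoc[of T "shift \<sigma> (s, a)" t 0 "[]" x]
            by (auto simp: g x pmf_nxt shift_def pmf_hist_0)
          have h2: "pmf (T s a) t * (if t = t0 then c else 0) = (if t = t0 then pmf (T s a) t0 * c else 0)"
            for t and c :: real by simp
          have h3: "(\<Sum>t\<in>UNIV. pmf (T s a) t * pmf (hist T (shift \<sigma> (s, a)) t 0) []) = 1"
            using gnil by (simp add: pmf_hist_0 sum_pmf_eq_1)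
          show ?thesis using True gnil n0
            by (simp add: h1 h2 h3 x pmf_nxt)
        qed
      qed
    qed
    finally show ?thesis .
  qed
qed

declare hist.simps[simp del]

lemma hist_hd: "h \<in> set_pmf (hist T \<sigma> s n) \<Longrightarrow> h \<noteq> [] \<Longrightarrow> fst (hd h) = s"
proof (induction n arbitrary: h)
  case 0 then show ?case by (simp add: hist.simps)
next
  case (Suc n)
  then obtain h' x where h': "h' \<in> set_pmf (hist T \<sigma> s n)" "x \<in> set_pmf (nxt T \<sigma> s h')" "h = h' @ [x]"
    by (auto simp: hist.simps)
  show ?case
  proof (cases "h' = []")
    case True then show ?thesis using h' by (auto simp: nxt_def)
  next
    case False then show ?thesis using h' Suc.IH by auto
  qed
qed

lemma hist_last: "h \<in> set_pmf (hist T \<sigma> s n) \<Longrightarrow> h \<noteq> [] \<Longrightarrow>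
    snd (last h) \<in> set_pmf (\<sigma> (butlast h) (fst (last h)))"
proof (induction n arbitrary: h)
  case 0 then show ?case by (simp add: hist.simps)
next
  case (Suc n)
  then obtain h' x where h': "h' \<in> set_pmf (hist T \<sigma> s n)" "x \<in> set_pmf (nxt T \<sigma> s h')" "h = h' @ [x]"
    by (auto simp: hist.simps)
  then show ?case by (cases "h' = []") (auto simp: nxt_def)
qed

locale M_ctx =
  fixes P :: "'s::finite \<Rightarrow> 'a::finite \<Rightarrow> 's pmf option" and Bad :: "'s set"
  assumes mdp: "\<forall>s. \<exists>a. legal P s a"
    and sinks: "\<forall>s\<in>Bad. (\<exists>!a. legal P s a) \<and> (\<forall>a. legal P s a \<longrightarrow> P s a = Some (return_pmf s))"
begin

abbreviation "T \<equiv> trans P"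

definition NB :: "('s \<times> 'a) list \<Rightarrow> bool" where
  "NB h \<longleftrightarrow> (\<forall>x\<in>set h. fst x \<notin> Bad)"

definition pre :: "('s \<times> 'a) list \<Rightarrow> (nat \<Rightarrow> 's \<times> 'a) set" where
  "pre h = {\<omega>. map \<omega> [0..<length h] = h}"

definition Qs :: "('s, 'a) strategy \<Rightarrow> 's \<Rightarrow> ('s \<times> 'a) list \<Rightarrow> real" where
  "Qs \<sigma> s h = measure (path_measure T \<sigma> s) (safe_paths Bad \<inter> pre h)"

lemma pre_in_sets': "{\<omega>. Q (map \<omega> [0..<n])} \<in> sets (path_measure T \<sigma> s)"
  using pre_in_sets[of n "{g. Q g}" T \<sigma> s] by simp

lemma safe_sets: "safe_paths Bad \<in> sets (path_measure T \<sigma> s)"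
proof -
  have "safe_paths Bad = (\<Inter>N\<in>UNIV. {\<omega>. NB (map \<omega> [0..<N])})"
    by (auto simp: safe_paths_def NB_def) (metis atLeastLessThan_iff less_add_Suc1 zero_le)
  also have "\<dots> \<in> sets (path_measure T \<sigma> s)"
    by (rule sets.countable_INT) (use pre_in_sets'[of NB _ \<sigma> s] in auto)
  finally show ?thesis .
qed

lemma pre_sets: "pre h \<in> sets (path_measure T \<sigma> s)"
proof -
  have "pre h = {\<omega>. map \<omega> [0..<length h] \<in> {h}}" by (auto simp: pre_def)
  then show ?thesis using pre_in_sets by metis
qed

lemma Q_lim: "(\<lambda>N. measure_pmf.prob (hist T \<sigma> s (N + length h)) {g. NB g \<and> take (length h) g = h}) \<longlonglongrightarrow> Qs \<sigma> s h"
proof -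
  interpret PS: prob_space "path_measure T \<sigma> s" by (rule prob_space_path)
  define n where "n = length h"
  define A where "A N = {\<omega> :: nat \<Rightarrow> 's \<times> 'a. map \<omega> [0..<N + n] \<in> {g. NB g \<and> take n g = h}}" for N
  have meas: "measure (path_measure T \<sigma> s) (A N) = measure_pmf.prob (hist T \<sigma> s (N + n)) {g. NB g \<and> take n g = h}" for N
    unfolding A_def by (rule measure_path)
  have Aeq: "A N = {\<omega>. (\<forall>i<N + n. fst (\<omega> i) \<notin> Bad) \<and> map \<omega> [0..<n] = h}" for N
  proof -
    have "take n (map \<omega> [0..<N + n]) = map \<omega> [0..<n]" for \<omega> :: "nat \<Rightarrow> 's \<times> 'a"
      by (simp add: take_map)
    then show ?thesis by (auto simp: A_def NB_def)
  qed
  have "(\<lambda>N. measure (path_measure T \<sigma> s) (A N)) \<longlonglongrightarrow> measure (path_measure T \<sigma> s) (\<Inter>N. A N)"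
  proof (rule Lim_measure_decseq)
    show "range A \<subseteq> sets (path_measure T \<sigma> s)" unfolding A_def using pre_in_sets by blast
    show "decseq A" unfolding decseq_def Aeq by auto
    show "emeasure (path_measure T \<sigma> s) (A N) \<noteq> \<infinity>" for N using PS.emeasure_finite by simp
  qed
  moreover have "(\<Inter>N. A N) = safe_paths Bad \<inter> pre h"
    unfolding Aeq by (auto simp: safe_paths_def pre_def n_def) (metis add_Suc less_add_Suc1)
  ultimately show ?thesis unfolding meas Qs_def n_def by simp
qed

lemma Qs_Nil: "Qs \<sigma> s [] = Pr_safe P Bad \<sigma> s"
  by (simp add: Qs_def Pr_safe_def pre_def)

lemma Pr_safe_lim: "(\<lambda>N. measure_pmf.prob (hist T \<sigma> s N) {g. NB g}) \<longlonglongrightarrow> Pr_safe P Bad \<sigma> s"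
  using Q_lim[of \<sigma> s "[]"] by (simp add: Qs_Nil)

end

lemma sum_UNIV_pair: "(\<Sum>x\<in>(UNIV :: ('x::finite \<times> 'y::finite) set). f x) = (\<Sum>a\<in>UNIV. \<Sum>b\<in>UNIV. f (a, b))"
proof -
  have "(\<Sum>a\<in>UNIV. \<Sum>b\<in>UNIV. f (a, b)) = (\<Sum>x\<in>UNIV \<times> UNIV. f x)"
    by (subst sum.cartesian_product) (simp add: case_prod_beta')
  then show ?thesis by (simp add: UNIV_Times_UNIV)
qed

lemma Hn_0: "Hn 0 = {[]}" by (auto simp: Hn_def)

context M_ctx
begin

lemma pre_map: "length h = n \<Longrightarrow> \<omega> \<in> pre h \<longleftrightarrow> h = map \<omega> [0..<n]"
  by (auto simp: pre_def)

lemma partition_Qs: "(\<Sum>h\<in>Hn n. Qs \<sigma> s h) = Pr_safe P Bad \<sigma> s"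
proof -
  interpret PS: prob_space "path_measure T \<sigma> s" by (rule prob_space_path)
  have "safe_paths Bad = (\<Union>h\<in>Hn n. safe_paths Bad \<inter> pre h)"
    by (auto simp: Hn_def pre_def)
  then have "Pr_safe P Bad \<sigma> s = measure (path_measure T \<sigma> s) (\<Union>h\<in>Hn n. safe_paths Bad \<inter> pre h)"
    by (simp add: Pr_safe_def)
  also have "\<dots> = (\<Sum>h\<in>Hn n. measure (path_measure T \<sigma> s) (safe_paths Bad \<inter> pre h))"
  proof (rule PS.finite_measure_finite_Union)
    show "(\<lambda>h. safe_paths Bad \<inter> pre h) ` Hn n \<subseteq> PS.events"
      using safe_sets pre_sets by blast
    show "disjoint_family_on (\<lambda>h. safe_paths Bad \<inter> pre h) (Hn n)"
      by (auto simp: disjoint_family_on_def Hn_def pre_def)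
  qed simp
  finally show ?thesis by (simp add: Qs_def)
qed

lemma integral_pre:
  assumes E: "E \<in> sets (path_measure T \<sigma> s)"
  shows "(\<integral>\<omega>. f (map \<omega> [0..<n]) * indicator E \<omega> \<partial>path_measure T \<sigma> s) =
    (\<Sum>h\<in>Hn n. f h * measure (path_measure T \<sigma> s) (E \<inter> pre h))"
proof -
  interpret PS: prob_space "path_measure T \<sigma> s" by (rule prob_space_path)
  have pt: "f (map \<omega> [0..<n]) * indicator E \<omega> = (\<Sum>h\<in>Hn n. f h * indicator (E \<inter> pre h) \<omega>)" for \<omega>
  proof -
    have "(\<Sum>h\<in>Hn n. f h * indicator (E \<inter> pre h) \<omega>) =
        (\<Sum>h\<in>Hn n. if h = map \<omega> [0..<n] then f h * indicator E \<omega> else 0)"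
      by (intro sum.cong refl) (auto simp: Hn_def pre_def indicator_def)
    also have "\<dots> = f (map \<omega> [0..<n]) * indicator E \<omega>"
      by (subst sum.delta, rule finite_Hn) (simp add: Hn_def)
    finally show ?thesis by simp
  qed
  have ES: "E \<inter> pre h \<in> sets (path_measure T \<sigma> s)" for h
    using E pre_sets by blast
  have int: "integrable (path_measure T \<sigma> s) (indicator (E \<inter> pre h) :: _ \<Rightarrow> real)" for h
    using ES by (simp add: integrable_indicator_iff space_path PS.emeasure_finite less_top[symmetric])
  have "(\<integral>\<omega>. (\<Sum>h\<in>Hn n. f h * indicator (E \<inter> pre h) \<omega>) \<partial>path_measure T \<sigma> s) =
      (\<Sum>h\<in>Hn n. (\<integral>\<omega>. f h * indicator (E \<inter> pre h) \<omega> \<partial>path_measure T \<sigma> s))"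
    by (rule Bochner_Integration.integral_sum[where I="Hn n" and M="path_measure T \<sigma> s" and f="\<lambda>h \<omega>. f h * indicator (E \<inter> pre h) \<omega>"])
       (simp add: int)
  also have "\<dots> = (\<Sum>h\<in>Hn n. f h * measure (path_measure T \<sigma> s) (E \<inter> pre h))"
    by (simp add: integral_mult_right_zero space_path)
  finally show ?thesis unfolding pt .
qed

abbreviation Y :: "nat \<Rightarrow> ('s \<times> 'a) list \<Rightarrow> ('s \<times> 'a) list set" where
  "Y k h \<equiv> {g. NB g \<and> take k g = h}"

lemma QF_fin:
  "measure_pmf.prob (hist T \<sigma> s (Suc M)) (Y (Suc k) ((s', a) # h)) =
    (if s' = s \<and> s \<notin> Bad then pmf (\<sigma> [] s) a *
       (\<Sum>t\<in>UNIV. pmf (T s a) t * measure_pmf.prob (hist T (shift \<sigma> (s, a)) t M) (Y k h)) else 0)"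
proof -
  have "measure_pmf.prob (hist T \<sigma> s (Suc M)) (Y (Suc k) ((s', a) # h)) =
      (\<Sum>x\<in>UNIV. \<Sum>g\<in>Hn M. if x # g \<in> Y (Suc k) ((s', a) # h) then pmf (hist T \<sigma> s (Suc M)) (x # g) else 0)"
    by (simp only: prob_hist_sum sum_Hn_Suc_front)
  also have "\<dots> = (\<Sum>x\<in>UNIV. if x = (s', a) then (\<Sum>g\<in>Hn M. if s' \<notin> Bad \<and> g \<in> Y k h
        then pmf (hist T \<sigma> s (Suc M)) ((s', a) # g) else 0) else 0)"
    by (intro sum.cong refl) (auto simp: NB_def)
  also have "\<dots> = (\<Sum>g\<in>Hn M. if s' \<notin> Bad \<and> g \<in> Y k h then pmf (hist T \<sigma> s (Suc M)) ((s', a) # g) else 0)"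
    by simp
  also have "\<dots> = (\<Sum>g\<in>Hn M. if s' = s \<and> s \<notin> Bad \<and> g \<in> Y k h then pmf (\<sigma> [] s) a *
      (\<Sum>t\<in>UNIV. pmf (T s a) t * pmf (hist T (shift \<sigma> (s, a)) t M) g) else 0)"
    by (intro sum.cong refl) (auto simp: hist_front)
  also have "\<dots> = (if s' = s \<and> s \<notin> Bad then pmf (\<sigma> [] s) a *
       (\<Sum>t\<in>UNIV. pmf (T s a) t * (\<Sum>g\<in>Hn M. if g \<in> Y k h then pmf (hist T (shift \<sigma> (s, a)) t M) g else 0)) else 0)"
  proof (cases "s' = s \<and> s \<notin> Bad")
    case True
    have "(\<Sum>g\<in>Hn M. if g \<in> Y k h then pmf (\<sigma> [] s) a * (\<Sum>t\<in>UNIV. pmf (T s a) t * pmf (hist T (shift \<sigma> (s, a)) t M) g) else 0)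
      = (\<Sum>g\<in>Hn M. pmf (\<sigma> [] s) a * (\<Sum>t\<in>UNIV. pmf (T s a) t * (if g \<in> Y k h then pmf (hist T (shift \<sigma> (s, a)) t M) g else 0)))"
      by (intro sum.cong refl) auto
    also have "\<dots> = pmf (\<sigma> [] s) a * (\<Sum>g\<in>Hn M. \<Sum>t\<in>UNIV. pmf (T s a) t * (if g \<in> Y k h then pmf (hist T (shift \<sigma> (s, a)) t M) g else 0))"
      by (simp add: sum_distrib_left)
    also have "\<dots> = pmf (\<sigma> [] s) a * (\<Sum>t\<in>UNIV. \<Sum>g\<in>Hn M. pmf (T s a) t * (if g \<in> Y k h then pmf (hist T (shift \<sigma> (s, a)) t M) g else 0))"
      by (subst sum.swap) simp
    also have "\<dots> = pmf (\<sigma> [] s) a * (\<Sum>t\<in>UNIV. pmf (T s a) t * (\<Sum>g\<in>Hn M. if g \<in> Y k h then pmf (hist T (shift \<sigma> (s, a)) t M) g else 0))"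
      by (simp add: sum_distrib_left)
    finally show ?thesis using True by simp
  next
    case False
    then show ?thesis by (subst sum.neutral) auto
  qed
  also have "\<dots> = (if s' = s \<and> s \<notin> Bad then pmf (\<sigma> [] s) a *
       (\<Sum>t\<in>UNIV. pmf (T s a) t * measure_pmf.prob (hist T (shift \<sigma> (s, a)) t M) (Y k h)) else 0)"
    by (simp only: prob_hist_sum)
  finally show ?thesis .
qed

lemma QF: "Qs \<sigma> s ((s', a) # h) = (if s' = s \<and> s \<notin> Bad then pmf (\<sigma> [] s) a *
       (\<Sum>t\<in>UNIV. pmf (T s a) t * Qs (shift \<sigma> (s, a)) t h) else 0)"
proof -
  define k where "k = length h"
  have 1: "(\<lambda>N. measure_pmf.prob (hist T \<sigma> s (N + Suc k)) (Y (Suc k) ((s', a) # h))) \<longlonglongrightarrow> Qs \<sigma> s ((s', a) # h)"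
    using Q_lim[of \<sigma> s "(s', a) # h"] by (simp add: k_def)
  have "(\<lambda>N. (if s' = s \<and> s \<notin> Bad then pmf (\<sigma> [] s) a *
       (\<Sum>t\<in>UNIV. pmf (T s a) t * measure_pmf.prob (hist T (shift \<sigma> (s, a)) t (N + k)) (Y k h)) else 0))
     \<longlonglongrightarrow> (if s' = s \<and> s \<notin> Bad then pmf (\<sigma> [] s) a *
       (\<Sum>t\<in>UNIV. pmf (T s a) t * Qs (shift \<sigma> (s, a)) t h) else 0)"
  proof (cases "s' = s \<and> s \<notin> Bad")
    case True
    show ?thesis using True Q_lim[of "shift \<sigma> (s, a)" _ h] unfolding k_def[symmetric]
      by (simp, intro tendsto_intros) auto
  next
    case False
    then show ?thesis by (simp only: if_False) (rule tendsto_const)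
  qed
  moreover have eqN: "measure_pmf.prob (hist T \<sigma> s (N + Suc k)) (Y (Suc k) ((s', a) # h)) =
      (if s' = s \<and> s \<notin> Bad then pmf (\<sigma> [] s) a *
       (\<Sum>t\<in>UNIV. pmf (T s a) t * measure_pmf.prob (hist T (shift \<sigma> (s, a)) t (N + k)) (Y k h)) else 0)" for N
    using QF_fin[of \<sigma> s "N + k" k s' a h] by simp
  ultimately have 2: "(\<lambda>N. measure_pmf.prob (hist T \<sigma> s (N + Suc k)) (Y (Suc k) ((s', a) # h))) \<longlonglongrightarrow>
      (if s' = s \<and> s \<notin> Bad then pmf (\<sigma> [] s) a * (\<Sum>t\<in>UNIV. pmf (T s a) t * Qs (shift \<sigma> (s, a)) t h) else 0)"
    by (simp only: eqN)
  show ?thesis using LIMSEQ_unique[OF 1 2] .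
qed

lemma QF_Nil: "Qs \<sigma> s [(s', a)] = (if s' = s \<and> s \<notin> Bad then pmf (\<sigma> [] s) a *
       (\<Sum>t\<in>UNIV. pmf (T s a) t * Pr_safe P Bad (shift \<sigma> (s, a)) t) else 0)"
  using QF[of \<sigma> s s' a "[]"] by (simp only: Qs_Nil)

lemma Pr_safe_step: "Pr_safe P Bad \<sigma> s = (if s \<notin> Bad then
    (\<Sum>a\<in>UNIV. pmf (\<sigma> [] s) a * (\<Sum>t\<in>UNIV. pmf (T s a) t * Pr_safe P Bad (shift \<sigma> (s, a)) t)) else 0)"
proof -
  have "Pr_safe P Bad \<sigma> s = (\<Sum>h\<in>Hn (Suc 0). Qs \<sigma> s h)"
    by (rule partition_Qs[symmetric])
  also have "\<dots> = (\<Sum>x\<in>UNIV. Qs \<sigma> s [x])"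
    by (simp add: sum_Hn_Suc_front Hn_0)
  also have "\<dots> = (\<Sum>s'\<in>UNIV. \<Sum>a\<in>UNIV. Qs \<sigma> s [(s', a)])"
    by (rule sum_UNIV_pair)
  also have "\<dots> = (\<Sum>s'\<in>UNIV. if s' = s then (\<Sum>a\<in>UNIV. if s \<notin> Bad then pmf (\<sigma> [] s) a *
       (\<Sum>t\<in>UNIV. pmf (T s a) t * Pr_safe P Bad (shift \<sigma> (s, a)) t) else 0) else 0)"
    by (intro sum.cong refl) (auto simp: QF_Nil)
  also have "\<dots> = (if s \<notin> Bad then
    (\<Sum>a\<in>UNIV. pmf (\<sigma> [] s) a * (\<Sum>t\<in>UNIV. pmf (T s a) t * Pr_safe P Bad (shift \<sigma> (s, a)) t)) else 0)"
    by simp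
  finally show ?thesis .
qed

end

context M_ctx
begin

lemma Pr_safe_nonneg: "0 \<le> Pr_safe P Bad \<sigma> s"
  by (simp add: Pr_safe_def)

lemma Pr_safe_le1: "Pr_safe P Bad \<sigma> s \<le> 1"
proof -
  interpret PS: prob_space "path_measure T \<sigma> s" by (rule prob_space_path)
  show ?thesis by (simp add: Pr_safe_def)
qed

definition "some_strat = (\<lambda>(h :: ('s \<times> 'a) list) x. return_pmf (SOME a. legal P x a))"

lemma some_strat: "is_strategy P some_strat"
  unfolding is_strategy_def some_strat_def using mdp by (auto intro: someI_ex)

lemma strats_nonempty: "{\<sigma>. is_strategy P \<sigma>} \<noteq> {}"
  using some_strat by blast

lemma shift_strategy: "is_strategy P \<sigma> \<Longrightarrow> is_strategy P (shift \<sigma> p)"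
  by (auto simp: is_strategy_def shift_def)

lemma bdd_Pr: "bdd_above ((\<lambda>\<sigma>. Pr_safe P Bad \<sigma> s) ` X)"
  by (rule bdd_aboveI[where M=1]) (auto simp: Pr_safe_le1)

lemma Pr_le_Val: "is_strategy P \<sigma> \<Longrightarrow> Pr_safe P Bad \<sigma> s \<le> Val P Bad s"
  unfolding Val_def by (rule cSUP_upper[OF _ bdd_Pr]) simp

lemma Val_nonneg: "0 \<le> Val P Bad s"
  using Pr_le_Val[OF some_strat, of s] Pr_safe_nonneg[of some_strat s] by linarith

lemma Val_le1: "Val P Bad s \<le> 1"
  unfolding Val_def by (rule cSUP_least[OF strats_nonempty]) (rule Pr_safe_le1)

lemma Pr_safe_Bad: "s \<in> Bad \<Longrightarrow> Pr_safe P Bad \<sigma> s = 0"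
  by (subst Pr_safe_step) simp

lemma Val_Bad: "s \<in> Bad \<Longrightarrow> Val P Bad s = 0"
proof -
  assume "s \<in> Bad"
  have "Val P Bad s \<le> 0"
    unfolding Val_def by (rule cSUP_least[OF strats_nonempty]) (simp add: Pr_safe_Bad[OF \<open>s \<in> Bad\<close>])
  then show ?thesis using Val_nonneg[of s] by linarith
qed

lemma hist_agree:
  assumes "\<And>g x. (g = [] \<longrightarrow> x = t) \<Longrightarrow> (g \<noteq> [] \<longrightarrow> fst (hd g) = t) \<Longrightarrow> \<sigma>1 g x = \<sigma>2 g x"
  shows "hist T' \<sigma>1 t n = hist T' \<sigma>2 t n"
proof (induction n)
  case 0 then show ?case by (simp add: hist.simps)
next
  case (Suc n)
  show ?case unfolding hist.simps Suc
  proof (rule bind_pmf_cong[OF refl])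
    fix h assume h: "h \<in> set_pmf (hist T' \<sigma>2 t n)"
    have "nxt T' \<sigma>1 t h = nxt T' \<sigma>2 t h"
    proof (cases "h = []")
      case True then show ?thesis using assms by (simp add: nxt_def)
    next
      case False
      then have "fst (hd h) = t" using hist_hd[OF h] by simp
      then show ?thesis using False assms by (simp add: nxt_def)
    qed
    then show "map_pmf (\<lambda>x. h @ [x]) (nxt T' \<sigma>1 t h) = map_pmf (\<lambda>x. h @ [x]) (nxt T' \<sigma>2 t h)" by simp
  qed
qed

lemma Pr_safe_agree:
  assumes "\<And>g x. (g = [] \<longrightarrow> x = t) \<Longrightarrow> (g \<noteq> [] \<longrightarrow> fst (hd g) = t) \<Longrightarrow> \<sigma>1 g x = \<sigma>2 g x"
  shows "Pr_safe P Bad \<sigma>1 t = Pr_safe P Bad \<sigma>2 t"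
proof -
  have "hist T \<sigma>1 t N = hist T \<sigma>2 t N" for N by (rule hist_agree[OF assms])
  then show ?thesis
    using Pr_safe_lim[of \<sigma>1 t] Pr_safe_lim[of \<sigma>2 t] LIMSEQ_unique by auto
qed

lemma sum_T_1: "(\<Sum>t\<in>UNIV. pmf (T s a) t) = 1"
  by (rule sum_pmf_eq_1) auto

lemma Val_lower:
  assumes legal: "legal P s a"
  shows "(\<Sum>t\<in>UNIV. pmf (T s a) t * Val P Bad t) \<le> Val P Bad s"
proof (cases "s \<in> Bad")
  case True
  then have "T s a = return_pmf s" using sinks legal by (auto simp: trans_def)
  then show ?thesis by (simp add: pmf_return indicator_def)
next
  case sB: False
  show ?thesis
  proof (rule field_le_epsilon)
    fix e :: real assume e: "0 < e"
    have "\<forall>t. \<exists>\<tau>. is_strategy P \<tau> \<and> Val P Bad t - e < Pr_safe P Bad \<tau> t"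
    proof
      fix t
      have "Val P Bad t - e < Val P Bad t" using e by simp
      then show "\<exists>\<tau>. is_strategy P \<tau> \<and> Val P Bad t - e < Pr_safe P Bad \<tau> t"
        unfolding Val_def less_cSUP_iff[OF strats_nonempty bdd_Pr] by auto
    qed
    then obtain \<tau> where \<tau>: "\<And>t. is_strategy P (\<tau> t)" "\<And>t. Val P Bad t - e < Pr_safe P Bad (\<tau> t) t"
      by metis
    define \<sigma>' where "\<sigma>' = (\<lambda>h x. if h = [] then (if x = s then return_pmf a else some_strat h x) else \<tau> (fst (hd (tl h @ [(x, undefined)]))) (tl h) x)"
    have str: "is_strategy P \<sigma>'"
      using \<tau>(1) legal some_strat unfolding is_strategy_def \<sigma>'_def by auto
    have sh: "Pr_safe P Bad (shift \<sigma>' (s, a)) t = Pr_safe P Bad (\<tau> t) t" for t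
    proof (rule Pr_safe_agree)
      fix g :: "('s \<times> 'a) list" and x assume A: "g = [] \<longrightarrow> x = t" "g \<noteq> [] \<longrightarrow> fst (hd g) = t"
      show "shift \<sigma>' (s, a) g x = \<tau> t g x"
        by (cases "g = []") (use A in \<open>auto simp: shift_def \<sigma>'_def\<close>)
    qed
    have "Pr_safe P Bad \<sigma>' s = (\<Sum>a'\<in>UNIV. pmf (return_pmf a) a' * (\<Sum>t\<in>UNIV. pmf (T s a') t * Pr_safe P Bad (shift \<sigma>' (s, a')) t))"
      using sB by (subst Pr_safe_step) (simp add: \<sigma>'_def)
    also have "\<dots> = (\<Sum>t\<in>UNIV. pmf (T s a) t * Pr_safe P Bad (\<tau> t) t)"
      by (simp add: pmf_return indicator_def sh)
    finally have 1: "Pr_safe P Bad \<sigma>' s = (\<Sum>t\<in>UNIV. pmf (T s a) t * Pr_safe P Bad (\<tau> t) t)" .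
    have "(\<Sum>t\<in>UNIV. pmf (T s a) t * Val P Bad t) - e = (\<Sum>t\<in>UNIV. pmf (T s a) t * (Val P Bad t - e))"
      by (simp add: right_diff_distrib sum_subtractf sum_distrib_right[symmetric] sum_T_1)
    also have "\<dots> \<le> (\<Sum>t\<in>UNIV. pmf (T s a) t * Pr_safe P Bad (\<tau> t) t)"
      by (intro sum_mono mult_left_mono) (auto intro: less_imp_le \<tau>(2))
    also have "\<dots> \<le> Val P Bad s" using 1 Pr_le_Val[OF str, of s] by simp
    finally show "(\<Sum>t\<in>UNIV. pmf (T s a) t * Val P Bad t) \<le> Val P Bad s + e" by simp
  qed
qed

lemma Opt_nonempty: "\<exists>a. (x, a) \<in> Opt P Bad"
proof (cases "x \<in> Bad")
  case True
  obtain a where a: "legal P x a" using mdp by blast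
  then have "T x a = return_pmf x" using True sinks by (auto simp: trans_def)
  then show ?thesis using a by (auto simp: Opt_def pmf_return indicator_def trans_def[symmetric])
next
  case xB: False
  define A where "A = {a. legal P x a}"
  define F where "F a = (\<Sum>t\<in>UNIV. pmf (T x a) t * Val P Bad t)" for a
  have A: "finite A" "A \<noteq> {}" using mdp by (auto simp: A_def)
  have "Max (F ` A) \<in> F ` A" using A by (intro Max_in) auto
  then obtain a0 where a0: "a0 \<in> A" "F a0 = Max (F ` A)"
    by (metis imageE)
  have Fle: "F a \<le> F a0" if "a \<in> A" for a
    unfolding a0(2) using that A by (intro Max_ge) auto
  have "Val P Bad x \<le> F a0"
    unfolding Val_def
  proof (rule cSUP_least[OF strats_nonempty])
    fix \<tau> assume "\<tau> \<in> {\<sigma>. is_strategy P \<sigma>}"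
    then have \<tau>: "is_strategy P \<tau>" by simp
    have "Pr_safe P Bad \<tau> x = (\<Sum>a\<in>UNIV. pmf (\<tau> [] x) a * (\<Sum>t\<in>UNIV. pmf (T x a) t * Pr_safe P Bad (shift \<tau> (x, a)) t))"
      using xB by (subst Pr_safe_step) simp
    also have "\<dots> \<le> (\<Sum>a\<in>UNIV. pmf (\<tau> [] x) a * F a0)"
    proof (intro sum_mono)
      fix a
      show "pmf (\<tau> [] x) a * (\<Sum>t\<in>UNIV. pmf (T x a) t * Pr_safe P Bad (shift \<tau> (x, a)) t) \<le> pmf (\<tau> [] x) a * F a0"
      proof (cases "a \<in> set_pmf (\<tau> [] x)")
        case True
        then have "a \<in> A" using \<tau> by (auto simp: is_strategy_def A_def)
        have "(\<Sum>t\<in>UNIV. pmf (T x a) t * Pr_safe P Bad (shift \<tau> (x, a)) t) \<le> F a"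
          unfolding F_def by (intro sum_mono mult_left_mono Pr_le_Val shift_strategy \<tau>) auto
        also have "\<dots> \<le> F a0" using Fle[OF \<open>a \<in> A\<close>] .
        finally show ?thesis by (intro mult_left_mono) auto
      next
        case False then show ?thesis by (simp add: set_pmf_eq)
      qed
    qed
    also have "\<dots> = F a0" by (simp add: sum_distrib_right[symmetric] sum_pmf_eq_1)
    finally show "Pr_safe P Bad \<tau> x \<le> F a0" .
  qed
  moreover have "F a0 \<le> Val P Bad x" unfolding F_def by (rule Val_lower) (use a0 in \<open>simp add: A_def\<close>)
  ultimately have "Val P Bad x = F a0" by simp
  then show ?thesis using a0 by (auto simp: Opt_def A_def F_def trans_def)
qed

end

context M_ctx
begin

definition U :: "('s \<times> 'a) list \<Rightarrow> real" where
  "U h = (if NB h then (\<Sum>t\<in>UNIV. pmf (T (fst (last h)) (snd (last h))) t * Val P Bad t) else 0)"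

definition G :: "('s \<times> 'a) list \<Rightarrow> real" where
  "G h = (if NB h then Val P Bad (fst (last h)) else 0)"

lemma U_nonneg: "0 \<le> U h"
  unfolding U_def by (auto intro!: sum_nonneg mult_nonneg_nonneg Val_nonneg)

lemma G_nonneg: "0 \<le> G h"
  unfolding G_def by (auto intro!: Val_nonneg)

lemma NB_Cons: "NB (x # g) \<longleftrightarrow> fst x \<notin> Bad \<and> NB g"
  by (simp add: NB_def)

lemma NB_snoc: "NB (g @ [x]) \<longleftrightarrow> NB g \<and> fst x \<notin> Bad"
  by (auto simp: NB_def)

lemma pmf_hist_1: "pmf (hist T \<sigma> s (Suc 0)) [(s', a)] = (if s' = s then pmf (\<sigma> [] s) a else 0)"
  using pmf_hist_snoc[of T \<sigma> s 0 "[]" "(s', a)"] by (simp add: pmf_hist_0 pmf_nxt)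

lemma UB:
  assumes "is_strategy P \<sigma>" "h \<noteq> []"
  shows "Qs \<sigma> s h \<le> pmf (hist T \<sigma> s (length h)) h * U h"
  using assms
proof (induction h arbitrary: \<sigma> s)
  case Nil then show ?case by simp
next
  case (Cons x g)
  obtain s' a where x: "x = (s', a)" by fastforce
  show ?case
  proof (cases "s' = s \<and> s \<notin> Bad")
    case False
    then have "Qs \<sigma> s (x # g) = 0" by (simp only: x QF if_not_P[OF False] if_False)
    then show ?thesis using U_nonneg[of "x # g"] by simp
  next
    case True
    then have s': "s' = s" "s \<notin> Bad" by auto
    have str: "is_strategy P (shift \<sigma> (s, a))" by (rule shift_strategy[OF Cons.prems(1)])
    show ?thesis
    proof (cases "g = []")
      case True
      have "Qs \<sigma> s (x # g) = pmf (\<sigma> [] s) a * (\<Sum>t\<in>UNIV. pmf (T s a) t * Pr_safe P Bad (shift \<sigma> (s, a)) t)"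
        using s' True by (simp add: x QF_Nil)
      also have "\<dots> \<le> pmf (\<sigma> [] s) a * (\<Sum>t\<in>UNIV. pmf (T s a) t * Val P Bad t)"
        by (intro mult_left_mono sum_mono Pr_le_Val str) auto
      also have "\<dots> = pmf (hist T \<sigma> s (length (x # g))) (x # g) * U (x # g)"
        using s' True by (simp add: x pmf_hist_1 U_def NB_def)
      finally show ?thesis .
    next
      case False
      have "Qs \<sigma> s (x # g) = pmf (\<sigma> [] s) a * (\<Sum>t\<in>UNIV. pmf (T s a) t * Qs (shift \<sigma> (s, a)) t g)"
        using s' by (simp add: x QF)
      also have "\<dots> \<le> pmf (\<sigma> [] s) a * (\<Sum>t\<in>UNIV. pmf (T s a) t * (pmf (hist T (shift \<sigma> (s, a)) t (length g)) g * U g))"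
        by (intro mult_left_mono sum_mono Cons.IH str False) auto
      also have "\<dots> = pmf (\<sigma> [] s) a * (\<Sum>t\<in>UNIV. pmf (T s a) t * pmf (hist T (shift \<sigma> (s, a)) t (length g)) g) * U g"
        by (simp add: sum_distrib_right sum_distrib_left mult_ac)
      also have "\<dots> = pmf (hist T \<sigma> s (length (x # g))) (x # g) * U (x # g)"
        using s' False by (simp add: x hist_front U_def NB_Cons)
      finally show ?thesis .
    qed
  qed
qed

lemma inner_G: "(\<Sum>x\<in>UNIV. pmf (nxt T \<sigma> s h) x * G (h @ [x])) = (if h = [] then Val P Bad s else U h)"
proof -
  have GV: "G (h @ [(t, b)]) = (if NB h then Val P Bad t else 0)" for t b
    by (auto simp: G_def NB_snoc Val_Bad)
  have GV0: "G [(t, b)] = Val P Bad t" for t b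
    by (auto simp: G_def NB_def Val_Bad)
  have "(\<Sum>x\<in>UNIV. pmf (nxt T \<sigma> s h) x * G (h @ [x])) = (\<Sum>t\<in>UNIV. \<Sum>b\<in>UNIV. pmf (nxt T \<sigma> s h) (t, b) * G (h @ [(t, b)]))"
    by (rule sum_UNIV_pair)
  also have "\<dots> = (if h = [] then Val P Bad s else U h)"
  proof (cases "h = []")
    case True
    have "(\<Sum>t\<in>UNIV. \<Sum>b\<in>UNIV. pmf (nxt T \<sigma> s h) (t, b) * G (h @ [(t, b)])) =
        (\<Sum>t\<in>UNIV. if t = s then (\<Sum>b\<in>UNIV. pmf (\<sigma> [] s) b) * Val P Bad s else 0)"
      using True by (intro sum.cong refl) (auto simp: pmf_nxt GV0 sum_distrib_right)
    also have "\<dots> = Val P Bad s" by (simp add: sum_pmf_eq_1)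
    finally show ?thesis using True by simp
  next
    case False
    have "(\<Sum>t\<in>UNIV. \<Sum>b\<in>UNIV. pmf (nxt T \<sigma> s h) (t, b) * G (h @ [(t, b)])) =
        (\<Sum>t\<in>UNIV. if NB h then pmf (T (fst (last h)) (snd (last h))) t * Val P Bad t * (\<Sum>b\<in>UNIV. pmf (\<sigma> h t) b) else 0)"
      using False by (intro sum.cong refl) (auto simp: pmf_nxt GV sum_distrib_left sum_distrib_right mult_ac)
    also have "\<dots> = U h" by (simp add: sum_pmf_eq_1 U_def)
    finally show ?thesis using False by simp
  qed
  finally show ?thesis .
qed

lemma EG_Suc: "(\<Sum>h\<in>Hn (Suc n). pmf (hist T \<sigma> s (Suc n)) h * G h) =
    (\<Sum>h\<in>Hn n. pmf (hist T \<sigma> s n) h * (if h = [] then Val P Bad s else U h))"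
proof -
  have "(\<Sum>h\<in>Hn (Suc n). pmf (hist T \<sigma> s (Suc n)) h * G h) =
      (\<Sum>h\<in>Hn n. pmf (hist T \<sigma> s n) h * (\<Sum>x\<in>UNIV. pmf (nxt T \<sigma> s h) x * G (h @ [x])))"
    by (simp add: sum_Hn_Suc pmf_hist_snoc sum_distrib_left mult_ac)
  then show ?thesis by (simp add: inner_G)
qed

lemma Hn_Suc_nonempty: "h \<in> Hn (Suc n) \<Longrightarrow> h \<noteq> []"
  by (auto simp: Hn_def)

lemma EG_1: "(\<Sum>h\<in>Hn (Suc 0). pmf (hist T \<sigma> s (Suc 0)) h * G h) = Val P Bad s"
  by (simp add: EG_Suc Hn_0 pmf_hist_0)

lemma EG_Suc': "(\<Sum>h\<in>Hn (Suc (Suc n)). pmf (hist T \<sigma> s (Suc (Suc n))) h * G h) =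
    (\<Sum>h\<in>Hn (Suc n). pmf (hist T \<sigma> s (Suc n)) h * U h)"
  unfolding EG_Suc by (intro sum.cong refl) (auto dest: Hn_Suc_nonempty)

lemma U_le_G:
  assumes "is_strategy P \<sigma>" "h \<noteq> []" "pmf (hist T \<sigma> s n) h \<noteq> 0"
  shows "U h \<le> G h"
proof -
  have "h \<in> set_pmf (hist T \<sigma> s n)" using assms(3) by (simp add: set_pmf_eq)
  from hist_last[OF this assms(2)] assms(1)
  have "legal P (fst (last h)) (snd (last h))" by (auto simp: is_strategy_def)
  then show ?thesis unfolding U_def G_def using Val_lower by auto
qed

lemma EG_le:
  assumes "is_strategy P \<sigma>"
  shows "(\<Sum>h\<in>Hn (Suc n). pmf (hist T \<sigma> s (Suc n)) h * G h) \<le> Val P Bad s"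
proof (induction n)
  case 0 then show ?case by (simp add: EG_1)
next
  case (Suc n)
  have "(\<Sum>h\<in>Hn (Suc (Suc n)). pmf (hist T \<sigma> s (Suc (Suc n))) h * G h) =
      (\<Sum>h\<in>Hn (Suc n). pmf (hist T \<sigma> s (Suc n)) h * U h)" by (rule EG_Suc')
  also have "\<dots> \<le> (\<Sum>h\<in>Hn (Suc n). pmf (hist T \<sigma> s (Suc n)) h * G h)"
  proof (intro sum_mono)
    fix h :: "('s \<times> 'a) list" assume h: "h \<in> Hn (Suc n)"
    show "pmf (hist T \<sigma> s (Suc n)) h * U h \<le> pmf (hist T \<sigma> s (Suc n)) h * G h"
      using U_le_G[OF assms Hn_Suc_nonempty[OF h], of s "Suc n"]
      by (cases "pmf (hist T \<sigma> s (Suc n)) h = 0") (auto intro: mult_left_mono)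
  qed
  finally show ?case using Suc by linarith
qed

end

context M_ctx
begin

lemma Opt_iff: "(s, a) \<in> Opt P Bad \<longleftrightarrow> legal P s a \<and> Val P Bad s = (\<Sum>t\<in>UNIV. pmf (T s a) t * Val P Bad t)"
  by (simp add: Opt_def trans_def)

lemma SW:
  assumes str: "is_strategy P \<sigma>" and opt: "Pr_safe P Bad \<sigma> s = Val P Bad s" and h: "h \<in> Hn (Suc n)"
  shows "Qs \<sigma> s h = pmf (hist T \<sigma> s (Suc n)) h * G h"
    and "pmf (hist T \<sigma> s (Suc n)) h * U h = pmf (hist T \<sigma> s (Suc n)) h * G h"
proof -
  define p where "p h = pmf (hist T \<sigma> s (Suc n)) h" for h
  define H where "H = (Hn (Suc n) :: ('s \<times> 'a) list set)"
  have fin: "finite H" by (simp add: H_def)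
  have a: "(\<Sum>h\<in>H. Qs \<sigma> s h) = Val P Bad s" using partition_Qs opt by (simp add: H_def)
  have b: "Qs \<sigma> s h \<le> p h * U h" if "h \<in> H" for h
  proof -
    have "h \<noteq> []" "length h = Suc n" using that by (auto simp: H_def Hn_def)
    with UB[OF str \<open>h \<noteq> []\<close>, of s] show ?thesis by (simp add: p_def)
  qed
  have c: "(\<Sum>h\<in>H. p h * U h) \<le> Val P Bad s"
    using EG_le[OF str, where n="Suc n" and s=s] unfolding EG_Suc' by (simp add: H_def p_def)
  have d: "p h * U h \<le> p h * G h" if "h \<in> H" for h
  proof (cases "p h = 0")
    case False
    have "h \<noteq> []" using that by (auto simp: H_def Hn_def)
    from U_le_G[OF str this False[unfolded p_def]] show ?thesis
      by (intro mult_left_mono) (auto simp: p_def)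
  qed simp
  have e: "(\<Sum>h\<in>H. p h * G h) \<le> Val P Bad s"
    using EG_le[OF str, where n=n and s=s] by (simp add: H_def p_def)
  have "(\<Sum>h\<in>H. p h * U h - Qs \<sigma> s h) = (\<Sum>h\<in>H. p h * U h) - (\<Sum>h\<in>H. Qs \<sigma> s h)"
    by (simp add: sum_subtractf)
  moreover have "(\<Sum>h\<in>H. p h * U h - Qs \<sigma> s h) \<ge> 0"
    using b by (intro sum_nonneg) auto
  ultimately have "(\<Sum>h\<in>H. p h * U h - Qs \<sigma> s h) = 0" using a c by linarith
  then have 1: "\<forall>h\<in>H. p h * U h - Qs \<sigma> s h = 0"
    using sum_nonneg_eq_0_iff[OF fin, of "\<lambda>h. p h * U h - Qs \<sigma> s h"] b by auto
  have "(\<Sum>h\<in>H. p h * G h - p h * U h) = (\<Sum>h\<in>H. p h * G h) - (\<Sum>h\<in>H. p h * U h)"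
    by (simp add: sum_subtractf)
  moreover have "(\<Sum>h\<in>H. p h * G h - p h * U h) \<ge> 0"
    using d by (intro sum_nonneg) auto
  moreover have "(\<Sum>h\<in>H. p h * U h) \<ge> Val P Bad s"
    using a b sum_mono[of H "Qs \<sigma> s" "\<lambda>h. p h * U h"] by auto
  ultimately have "(\<Sum>h\<in>H. p h * G h - p h * U h) = 0" using e by linarith
  then have 2: "\<forall>h\<in>H. p h * G h - p h * U h = 0"
    using sum_nonneg_eq_0_iff[OF fin, of "\<lambda>h. p h * G h - p h * U h"] d by auto
  show "Qs \<sigma> s h = pmf (hist T \<sigma> s (Suc n)) h * G h"
    using 1 2 h by (auto simp: H_def p_def)
  show "pmf (hist T \<sigma> s (Suc n)) h * U h = pmf (hist T \<sigma> s (Suc n)) h * G h"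
    using 2 h by (auto simp: H_def p_def)
qed

lemma OA:
  assumes str: "is_strategy P \<sigma>" and opt: "Pr_safe P Bad \<sigma> s = Val P Bad s" and h: "h \<in> Hn (Suc n)"
    and p: "pmf (hist T \<sigma> s (Suc n)) h \<noteq> 0" and nb: "NB h"
  shows "(fst (last h), snd (last h)) \<in> Opt P Bad"
proof -
  have "U h = G h" using SW(2)[OF str opt h] p by simp
  then have eq: "Val P Bad (fst (last h)) = (\<Sum>t\<in>UNIV. pmf (T (fst (last h)) (snd (last h))) t * Val P Bad t)"
    using nb by (simp add: U_def G_def)
  have "h \<in> set_pmf (hist T \<sigma> s (Suc n))" using p by (simp add: set_pmf_eq)
  from hist_last[OF this Hn_Suc_nonempty[OF h]] str
  have "legal P (fst (last h)) (snd (last h))" by (auto simp: is_strategy_def)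
  then show ?thesis using eq Opt_iff[of "fst (last h)" "snd (last h)"] by blast
qed

lemma pruned_strategy: "is_pruned_strategy P Bad \<sigma> \<Longrightarrow> is_strategy P \<sigma>"
  by (auto simp: is_pruned_strategy_def is_strategy_def Opt_def)

lemma pruned_last_Opt:
  assumes "is_pruned_strategy P Bad \<sigma>" "pmf (hist T' \<sigma> s n) h \<noteq> 0" "h \<noteq> []"
  shows "(fst (last h), snd (last h)) \<in> Opt P Bad"
proof -
  have "h \<in> set_pmf (hist T' \<sigma> s n)" using assms(2) by (simp add: set_pmf_eq)
  from hist_last[OF this assms(3)] assms(1) show ?thesis
    unfolding is_pruned_strategy_def by blast
qed

lemma pruned_UG:
  assumes "is_pruned_strategy P Bad \<sigma>" "h \<noteq> []"
  shows "pmf (hist T \<sigma> s n) h * U h = pmf (hist T \<sigma> s n) h * G h"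
proof (cases "pmf (hist T \<sigma> s n) h = 0")
  case False
  from pruned_last_Opt[OF assms(1) False assms(2)]
  have "Val P Bad (fst (last h)) = (\<Sum>t\<in>UNIV. pmf (T (fst (last h)) (snd (last h))) t * Val P Bad t)"
    using Opt_iff[of "fst (last h)" "snd (last h)"] by blast
  then show ?thesis by (simp add: U_def G_def)
qed simp

lemma pruned_EG:
  assumes "is_pruned_strategy P Bad \<sigma>"
  shows "(\<Sum>h\<in>Hn (Suc n). pmf (hist T \<sigma> s (Suc n)) h * G h) = Val P Bad s"
proof (induction n)
  case 0 then show ?case by (simp add: EG_1)
next
  case (Suc n)
  have "(\<Sum>h\<in>Hn (Suc (Suc n)). pmf (hist T \<sigma> s (Suc (Suc n))) h * G h) =
      (\<Sum>h\<in>Hn (Suc n). pmf (hist T \<sigma> s (Suc n)) h * U h)" by (rule EG_Suc')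
  also have "\<dots> = (\<Sum>h\<in>Hn (Suc n). pmf (hist T \<sigma> s (Suc n)) h * G h)"
    by (intro sum.cong refl pruned_UG[OF assms]) (auto dest: Hn_Suc_nonempty)
  finally show ?case using Suc by simp
qed

lemma part1:
  assumes "is_pruned_strategy P Bad \<sigma>"
  shows "Pr_safe P Bad \<sigma> s = Val P Bad s"
proof (rule antisym)
  show "Pr_safe P Bad \<sigma> s \<le> Val P Bad s" by (rule Pr_le_Val[OF pruned_strategy[OF assms]])
  show "Val P Bad s \<le> Pr_safe P Bad \<sigma> s"
  proof (rule LIMSEQ_le_const[OF Pr_safe_lim])
    show "\<exists>N. \<forall>n\<ge>N. Val P Bad s \<le> measure_pmf.prob (hist T \<sigma> s n) {g. NB g}"
    proof (intro exI allI impI)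
      fix n :: nat assume "Suc 0 \<le> n"
      then obtain m where n: "n = Suc m" by (cases n) auto
      have "Val P Bad s = (\<Sum>h\<in>Hn (Suc m). pmf (hist T \<sigma> s (Suc m)) h * G h)"
        by (rule pruned_EG[OF assms, symmetric])
      also have "\<dots> \<le> (\<Sum>h\<in>Hn (Suc m). if h \<in> {g. NB g} then pmf (hist T \<sigma> s (Suc m)) h else 0)"
        by (intro sum_mono) (auto simp: G_def intro: mult_right_le_one_le Val_le1 Val_nonneg)
      also have "\<dots> = measure_pmf.prob (hist T \<sigma> s (Suc m)) {g. NB g}"
        by (simp only: prob_hist_sum)
      finally show "Val P Bad s \<le> measure_pmf.prob (hist T \<sigma> s n) {g. NB g}" using n by simp
    qed
  qed
qed

end

definition rw :: "('s \<Rightarrow> 'a \<Rightarrow> real) \<Rightarrow> ('s \<times> 'a) list \<Rightarrow> real" where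
  "rw R h = sum_list (map (\<lambda>x. R (fst x) (snd x)) h)"

lemma reward_rw: "reward_n R n \<omega> = rw R (map \<omega> [0..<n])"
proof -
  have "reward_n R n \<omega> = (\<Sum>i\<in>set [0..<n]. R (fst (\<omega> i)) (snd (\<omega> i)))"
    by (simp add: reward_n_def atLeast0LessThan)
  also have "\<dots> = sum_list (map (\<lambda>i. R (fst (\<omega> i)) (snd (\<omega> i))) [0..<n])"
    by (rule sum_set_upt_conv_sum_list_nat)
  finally show ?thesis by (simp add: rw_def comp_def)
qed

lemma integral_pre_all:
  fixes T' :: "'s::finite \<Rightarrow> 'a::finite \<Rightarrow> 's pmf"
  shows "(\<integral>\<omega>. f (map \<omega> [0..<n]) \<partial>path_measure T' \<sigma> s) = (\<Sum>h\<in>Hn n. f h * pmf (hist T' \<sigma> s n) h)"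
proof -
  interpret PS: prob_space "path_measure T' \<sigma> s" by (rule prob_space_path)
  define pr where "pr h = {\<omega> :: nat \<Rightarrow> 's \<times> 'a. map \<omega> [0..<n] \<in> {h}}" for h
  have pt: "f (map \<omega> [0..<n]) = (\<Sum>h\<in>Hn n. f h * indicator (pr h) \<omega>)" for \<omega>
  proof -
    have "(\<Sum>h\<in>Hn n. f h * indicator (pr h) \<omega>) = (\<Sum>h\<in>Hn n. if h = map \<omega> [0..<n] then f h else 0)"
      by (intro sum.cong refl) (auto simp: pr_def indicator_def)
    also have "\<dots> = f (map \<omega> [0..<n])"
      by (subst sum.delta, rule finite_Hn) (simp add: Hn_def)
    finally show ?thesis by simp
  qed
  have ES: "pr h \<in> sets (path_measure T' \<sigma> s)" for h unfolding pr_def by (rule pre_in_sets)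
  have int: "integrable (path_measure T' \<sigma> s) (indicator (pr h) :: _ \<Rightarrow> real)" for h
    using ES by (simp add: integrable_indicator_iff space_path PS.emeasure_finite less_top[symmetric])
  have "(\<integral>\<omega>. (\<Sum>h\<in>Hn n. f h * indicator (pr h) \<omega>) \<partial>path_measure T' \<sigma> s) =
      (\<Sum>h\<in>Hn n. (\<integral>\<omega>. f h * indicator (pr h) \<omega> \<partial>path_measure T' \<sigma> s))"
    by (rule Bochner_Integration.integral_sum[where I="Hn n" and M="path_measure T' \<sigma> s" and f="\<lambda>h \<omega>. f h * indicator (pr h) \<omega>"])
       (simp add: int)
  also have "\<dots> = (\<Sum>h\<in>Hn n. f h * measure (path_measure T' \<sigma> s) (pr h))"
    by (simp add: integral_mult_right_zero space_path)
  also have "\<dots> = (\<Sum>h\<in>Hn n. f h * pmf (hist T' \<sigma> s n) h)"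
    unfolding pr_def measure_path by (simp add: measure_pmf_single)
  finally show ?thesis unfolding pt .
qed

context M_ctx
begin

abbreviation "T' \<equiv> pruned_trans P Bad"

lemma pmf_pruned:
  assumes opt: "(s, a) \<in> Opt P Bad" and pos: "Val P Bad s > 0"
  shows "pmf (T' s a) t = pmf (T s a) t * Val P Bad t / Val P Bad s"
proof -
  define f where "f t = pmf (T s a) t * Val P Bad t / Val P Bad s" for t
  have eq: "Val P Bad s = (\<Sum>t\<in>UNIV. pmf (T s a) t * Val P Bad t)" using opt Opt_iff by blast
  have "(\<Sum>t\<in>UNIV. f t) = 1"
    using pos unfolding f_def eq[symmetric] sum_divide_distrib[symmetric] by simp
  then have "(\<integral>\<^sup>+ x. ennreal (f x) \<partial>count_space UNIV) = 1"
    by (subst nn_integral_count_space_finite) (auto simp: f_def Val_nonneg intro!: sum_nonneg)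
  moreover have "\<And>x. 0 \<le> f x" using pos by (auto simp: f_def Val_nonneg)
  ultimately have "pmf (embed_pmf f) t = f t" by (intro pmf_embed_pmf) auto
  moreover have "T' s a = embed_pmf f"
    using opt pos by (simp add: pruned_trans_def pruned_states_def f_def[abs_def] trans_def)
  ultimately show ?thesis by (simp add: f_def)
qed

definition G' :: "'s \<Rightarrow> ('s \<times> 'a) list \<Rightarrow> real" where
  "G' s0 h = (if h = [] then Val P Bad s0 else G h)"

lemma pruned_identity:
  assumes pr: "is_pruned_strategy P Bad \<sigma>" and pos: "Val P Bad s0 > 0"
  shows "length h = n \<Longrightarrow> pmf (hist T' \<sigma> s0 n) h * Val P Bad s0 = pmf (hist T \<sigma> s0 n) h * G' s0 h"
proof (induction n arbitrary: h)
  case 0 then show ?case by (simp add: pmf_hist_0 G'_def)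
next
  case (Suc n)
  then obtain h0 x where h: "h = h0 @ [x]" "length h0 = n"
    by (metis append_butlast_last_id length_Suc_conv length_butlast list.distinct(1) diff_Suc_1)
  obtain t b where x: "x = (t, b)" by fastforce
  have s0B: "s0 \<notin> Bad" using pos Val_Bad by force
  have Gx: "G' s0 (h0 @ [(t, b)]) = (if NB h0 then Val P Bad t else 0)"
    by (auto simp: G'_def G_def NB_snoc Val_Bad)
  have IH: "pmf (hist T' \<sigma> s0 n) h0 * Val P Bad s0 = pmf (hist T \<sigma> s0 n) h0 * G' s0 h0"
    using Suc.IH h(2) by simp
  show ?case
  proof (cases "h0 = []")
    case True
    have n0: "n = 0" using h(2) True by simp
    have p1: "pmf (hist T'' \<sigma> s0 (Suc 0)) [(t, b)] = (if t = s0 then pmf (\<sigma> [] s0) b else 0)" for T''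
      using pmf_hist_snoc[of T'' \<sigma> s0 0 "[]" "(t, b)"] by (simp add: pmf_hist_0 pmf_nxt)
    show ?thesis
      using s0B by (auto simp: h x True n0 p1 G'_def G_def NB_def)
  next
    case False
    define s a where "s = fst (last h0)" and "a = snd (last h0)"
    have L: "pmf (hist T' \<sigma> s0 (Suc n)) h * Val P Bad s0 =
        pmf (hist T \<sigma> s0 n) h0 * G h0 * (pmf (T' s a) t * pmf (\<sigma> h0 t) b)"
      using IH False by (simp add: h x pmf_hist_snoc pmf_nxt s_def a_def G'_def mult_ac)
    have R: "pmf (hist T \<sigma> s0 (Suc n)) h * G' s0 h =
        pmf (hist T \<sigma> s0 n) h0 * (pmf (T s a) t * pmf (\<sigma> h0 t) b) * (if NB h0 then Val P Bad t else 0)"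
      using False by (simp add: h x pmf_hist_snoc pmf_nxt s_def a_def Gx)
    show ?thesis
    proof (cases "pmf (hist T \<sigma> s0 n) h0 = 0")
      case True then show ?thesis unfolding L R by simp
    next
      case p0: False
      have opt: "(s, a) \<in> Opt P Bad"
        using pruned_last_Opt[OF pr p0 False] by (simp add: s_def a_def)
      have eq: "Val P Bad s = (\<Sum>t\<in>UNIV. pmf (T s a) t * Val P Bad t)" using opt Opt_iff by blast
      show ?thesis
      proof (cases "NB h0")
        case False then show ?thesis unfolding L R by (simp add: G_def)
      next
        case nb: True
        show ?thesis
        proof (cases "Val P Bad s > 0")
          case True
          have Gh: "G h0 = Val P Bad s" using nb by (simp add: G_def s_def)
          show ?thesis unfolding L R using nb True
            by (simp add: pmf_pruned[OF opt True] Gh field_simps)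
        next
          case False
          then have v0: "Val P Bad s = 0" using Val_nonneg[of s] by simp
          have "pmf (T s a) t * Val P Bad t = 0"
          proof -
            have "(\<Sum>t\<in>UNIV. pmf (T s a) t * Val P Bad t) = 0" using eq v0 by simp
            then show ?thesis
              by (subst (asm) sum_nonneg_eq_0_iff) (auto intro: mult_nonneg_nonneg Val_nonneg)
          qed
          then show ?thesis unfolding L R using nb v0 by (auto simp: G_def s_def)
        qed
      qed
    qed
  qed
qed

end

context M_ctx
begin

lemma cond_formula:
  assumes str: "is_strategy P \<sigma>" and opt: "Pr_safe P Bad \<sigma> s0 = Val P Bad s0"
  shows "cond_MP P R Bad \<sigma> s0 = liminf (\<lambda>n. ereal (1 / real n *
      (\<Sum>h\<in>Hn n. rw R h * (pmf (hist T \<sigma> s0 n) h * G h)) / Val P Bad s0))"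
proof -
  have "1 / real n * (\<integral>\<omega>. reward_n R n \<omega> * indicator (safe_paths Bad) \<omega> \<partial>path_measure T \<sigma> s0) / Pr_safe P Bad \<sigma> s0
     = 1 / real n * (\<Sum>h\<in>Hn n. rw R h * (pmf (hist T \<sigma> s0 n) h * G h)) / Val P Bad s0" for n
  proof (cases n)
    case 0 then show ?thesis by simp
  next
    case (Suc m)
    have "(\<integral>\<omega>. reward_n R n \<omega> * indicator (safe_paths Bad) \<omega> \<partial>path_measure T \<sigma> s0) =
        (\<Sum>h\<in>Hn n. rw R h * measure (path_measure T \<sigma> s0) (safe_paths Bad \<inter> pre h))"
      unfolding reward_rw by (rule integral_pre[OF safe_sets])
    also have "\<dots> = (\<Sum>h\<in>Hn n. rw R h * (pmf (hist T \<sigma> s0 n) h * G h))"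
      using SW(1)[OF str opt] unfolding Suc by (intro sum.cong refl) (simp add: Qs_def)
    finally show ?thesis using opt by simp
  qed
  then show ?thesis by (simp add: cond_MP_def)
qed

lemma pruned_formula:
  assumes pr: "is_pruned_strategy P Bad \<sigma>" and pos: "Val P Bad s0 > 0"
  shows "pruned_exp_MP P R Bad \<sigma> s0 = liminf (\<lambda>n. ereal (1 / real n *
      (\<Sum>h\<in>Hn n. rw R h * (pmf (hist T \<sigma> s0 n) h * G h)) / Val P Bad s0))"
proof -
  have "1 / real n * (\<integral>\<omega>. reward_n R n \<omega> \<partial>path_measure T' \<sigma> s0)
     = 1 / real n * (\<Sum>h\<in>Hn n. rw R h * (pmf (hist T \<sigma> s0 n) h * G h)) / Val P Bad s0" for n
  proof (cases n)
    case 0 then show ?thesis by simp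
  next
    case (Suc m)
    have "(\<integral>\<omega>. reward_n R n \<omega> \<partial>path_measure T' \<sigma> s0) = (\<Sum>h\<in>Hn n. rw R h * pmf (hist T' \<sigma> s0 n) h)"
      unfolding reward_rw by (rule integral_pre_all)
    also have "\<dots> = (\<Sum>h\<in>Hn n. rw R h * (pmf (hist T \<sigma> s0 n) h * G h) / Val P Bad s0)"
    proof (intro sum.cong refl)
      fix h :: "('s \<times> 'a) list" assume "h \<in> Hn n"
      then have l: "length h = n" and ne: "h \<noteq> []" using Suc by (auto simp: Hn_def)
      have "pmf (hist T' \<sigma> s0 n) h * Val P Bad s0 = pmf (hist T \<sigma> s0 n) h * G h"
        using pruned_identity[OF pr pos l] ne by (simp add: G'_def)
      then have "pmf (hist T' \<sigma> s0 n) h = pmf (hist T \<sigma> s0 n) h * G h / Val P Bad s0"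
        using pos by (simp add: field_simps)
      then show "rw R h * pmf (hist T' \<sigma> s0 n) h = rw R h * (pmf (hist T \<sigma> s0 n) h * G h) / Val P Bad s0"
        by simp
    qed
    also have "\<dots> = (\<Sum>h\<in>Hn n. rw R h * (pmf (hist T \<sigma> s0 n) h * G h)) / Val P Bad s0"
      by (simp add: sum_divide_distrib)
    finally show ?thesis by simp
  qed
  then show ?thesis by (simp add: pruned_exp_MP_def exp_MP_def)
qed

lemma cond_eq_pruned:
  assumes pr: "is_pruned_strategy P Bad \<sigma>" and pos: "Val P Bad s0 > 0"
  shows "cond_MP P R Bad \<sigma> s0 = pruned_exp_MP P R Bad \<sigma> s0"
  using cond_formula[OF pruned_strategy[OF pr] part1[OF pr]] pruned_formula[OF pr pos] by simp

definition fix_strat :: "('s, 'a) strategy \<Rightarrow> ('s, 'a) strategy" where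
  "fix_strat \<sigma> = (\<lambda>g x. if set_pmf (\<sigma> g x) \<subseteq> {a. (x, a) \<in> Opt P Bad} then \<sigma> g x
      else return_pmf (SOME a. (x, a) \<in> Opt P Bad))"

lemma fix_pruned: "is_pruned_strategy P Bad (fix_strat \<sigma>)"
  unfolding is_pruned_strategy_def fix_strat_def
  using Opt_nonempty by (auto intro: someI_ex)

lemma fix_agree:
  assumes str: "is_strategy P \<sigma>" and opt: "Pr_safe P Bad \<sigma> s0 = Val P Bad s0" and pos: "Val P Bad s0 > 0"
  shows "length h = n \<Longrightarrow> NB h \<Longrightarrow> pmf (hist T (fix_strat \<sigma>) s0 n) h = pmf (hist T \<sigma> s0 n) h"
proof (induction n arbitrary: h)
  case 0 then show ?case by (simp add: pmf_hist_0)
next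
  case (Suc n)
  then obtain h0 x where h: "h = h0 @ [x]" "length h0 = n"
    by (metis append_butlast_last_id length_Suc_conv length_butlast list.distinct(1) diff_Suc_1)
  obtain t b where x: "x = (t, b)" by fastforce
  have nb: "NB h0" "t \<notin> Bad" using Suc.prems(2) by (auto simp: h x NB_snoc)
  have IH: "pmf (hist T (fix_strat \<sigma>) s0 n) h0 = pmf (hist T \<sigma> s0 n) h0"
    using Suc.IH h(2) nb by simp
  show ?case
  proof (cases "pmf (hist T \<sigma> s0 n) h0 = 0")
    case True then show ?thesis using IH by (simp add: h pmf_hist_snoc)
  next
    case p0: False
    have "pmf (nxt T (fix_strat \<sigma>) s0 h0) (t, b) = pmf (nxt T \<sigma> s0 h0) (t, b)"
    proof (cases "h0 = []")
      case True
      then have n0: "n = 0" using h(2) by simp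
      have "fix_strat \<sigma> [] s0 = \<sigma> [] s0" if "t = s0"
      proof -
        have "(s0, b') \<in> Opt P Bad" if "b' \<in> set_pmf (\<sigma> [] s0)" for b'
        proof -
          have "pmf (hist T \<sigma> s0 (Suc 0)) [(s0, b')] \<noteq> 0"
            using that by (simp add: pmf_hist_1 set_pmf_eq)
          moreover have "NB [(s0, b')]" using nb \<open>t = s0\<close> by (simp add: NB_def)
          ultimately show ?thesis
            using OA[OF str opt, of "[(s0, b')]" 0] by (simp add: Hn_def)
        qed
        then show ?thesis by (auto simp: fix_strat_def)
      qed
      then show ?thesis using True by (simp add: pmf_nxt)
    next
      case False
      show ?thesis
      proof (cases "pmf (T (fst (last h0)) (snd (last h0))) t = 0")
        case True then show ?thesis using False by (simp add: pmf_nxt)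
      next
        case T0: False
        have "(t, b') \<in> Opt P Bad" if "b' \<in> set_pmf (\<sigma> h0 t)" for b'
        proof -
          have "pmf (hist T \<sigma> s0 (Suc n)) (h0 @ [(t, b')]) \<noteq> 0"
            using that p0 T0 False by (simp add: pmf_hist_snoc pmf_nxt set_pmf_eq)
          moreover have "NB (h0 @ [(t, b')])" using nb by (simp add: NB_snoc)
          ultimately show ?thesis
            using OA[OF str opt, of "h0 @ [(t, b')]" n] h(2) by (simp add: Hn_def)
        qed
        then have "fix_strat \<sigma> h0 t = \<sigma> h0 t" by (auto simp: fix_strat_def)
        then show ?thesis using False by (simp add: pmf_nxt)
      qed
    qed
    then show ?thesis using IH by (simp add: h x pmf_hist_snoc)
  qed
qed

lemma fix_cond:
  assumes str: "is_strategy P \<sigma>" and opt: "Pr_safe P Bad \<sigma> s0 = Val P Bad s0" and pos: "Val P Bad s0 > 0"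
  shows "cond_MP P R Bad \<sigma> s0 = cond_MP P R Bad (fix_strat \<sigma>) s0"
proof -
  have eq: "(\<Sum>h\<in>Hn n. rw R h * (pmf (hist T \<sigma> s0 n) h * G h)) =
      (\<Sum>h\<in>Hn n. rw R h * (pmf (hist T (fix_strat \<sigma>) s0 n) h * G h))" for n
  proof (intro sum.cong refl)
    fix h :: "('s \<times> 'a) list" assume "h \<in> Hn n"
    then have l: "length h = n" by (simp add: Hn_def)
    show "rw R h * (pmf (hist T \<sigma> s0 n) h * G h) = rw R h * (pmf (hist T (fix_strat \<sigma>) s0 n) h * G h)"
      using fix_agree[OF str opt pos l] by (cases "NB h") (auto simp: G_def)
  qed
  show ?thesis
    unfolding cond_formula[OF str opt] cond_formula[OF pruned_strategy[OF fix_pruned] part1[OF fix_pruned]] eq ..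
qed

end

theorem theorem3:
  fixes P :: "'s::finite \<Rightarrow> 'a::finite \<Rightarrow> 's pmf option"
    and R :: "'s \<Rightarrow> 'a \<Rightarrow> real"
    and Bad :: "'s set"
    and s0 :: 's
    and \<sigma>star :: "('s, 'a) strategy"
  assumes mdp: "\<forall>s. \<exists>a. legal P s a"
    and sinks: "\<forall>s\<in>Bad. (\<exists>!a. legal P s a) \<and>
                          (\<forall>a. legal P s a \<longrightarrow> P s a = Some (return_pmf s))"
    and pos: "Val P Bad s0 > 0"
    and strat: "is_pruned_strategy P Bad \<sigma>star"
    and maxim: "\<forall>\<sigma>. is_pruned_strategy P Bad \<sigma> \<longrightarrow>
                      pruned_exp_MP P R Bad \<sigma> s0 \<le> pruned_exp_MP P R Bad \<sigma>star s0"
  shows "Pr_safe P Bad \<sigma>star s0 = Val P Bad s0 \<and>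
         cond_MP P R Bad \<sigma>star s0 =
           (SUP \<sigma>\<in>opt_safe_strategies P Bad s0. cond_MP P R Bad \<sigma> s0)"
proof -
  interpret M_ctx P Bad using mdp sinks by unfold_locales
  have 1: "Pr_safe P Bad \<sigma>star s0 = Val P Bad s0" by (rule part1[OF strat])
  have mem: "\<sigma>star \<in> opt_safe_strategies P Bad s0"
    using 1 pruned_strategy[OF strat] by (simp add: opt_safe_strategies_def)
  have le: "cond_MP P R Bad \<sigma> s0 \<le> cond_MP P R Bad \<sigma>star s0" if "\<sigma> \<in> opt_safe_strategies P Bad s0" for \<sigma>
  proof -
    have str: "is_strategy P \<sigma>" and opt: "Pr_safe P Bad \<sigma> s0 = Val P Bad s0"
      using that by (auto simp: opt_safe_strategies_def)
    have "cond_MP P R Bad \<sigma> s0 = cond_MP P R Bad (fix_strat \<sigma>) s0" by (rule fix_cond[OF str opt pos])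
    also have "\<dots> = pruned_exp_MP P R Bad (fix_strat \<sigma>) s0" by (rule cond_eq_pruned[OF fix_pruned pos])
    also have "\<dots> \<le> pruned_exp_MP P R Bad \<sigma>star s0" using maxim fix_pruned by blast
    also have "\<dots> = cond_MP P R Bad \<sigma>star s0" by (rule cond_eq_pruned[OF strat pos, symmetric])
    finally show ?thesis .
  qed
  have "cond_MP P R Bad \<sigma>star s0 = (SUP \<sigma>\<in>opt_safe_strategies P Bad s0. cond_MP P R Bad \<sigma> s0)"
  proof (rule antisym)
    show "cond_MP P R Bad \<sigma>star s0 \<le> (SUP \<sigma>\<in>opt_safe_strategies P Bad s0. cond_MP P R Bad \<sigma> s0)"
      by (rule SUP_upper[OF mem])
    show "(SUP \<sigma>\<in>opt_safe_strategies P Bad s0. cond_MP P R Bad \<sigma> s0) \<le> cond_MP P R Bad \<sigma>star s0"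
      by (rule SUP_least) (rule le)
  qed
  with 1 show ?thesis by simp
qed

end
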